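(* Let $s=(s_1,\dots,s_m)$ be a sequence of positive integers and let $L=\mathrm{Av}_s(212)$ be the set of Stirling $s$-words. Algorithm B, started from $1^{s_1}2^{s_2}\cdots m^{s_m}$, visits every word of $L$ exactly once and then halts, and any two consecutively visited words differ by a bump of distance $1$ (i.e., a run of some value is moved past exactly one smaller letter, which is a transposition of two entries).
   Context: For a sequence $s=(s_1,\dots,s_m)$ of positive integers, an $s$-word is a word $w=w_1\cdots w_n$ ($n=s_1+\dots+s_m$) with exactly $s_i$ copies of $i$ for each $i\in[m]$; $S_s$ is the set of $s$-words. A word $w$ contains the pattern $212$ if there are indices $i<j<k$ with $w_i=w_k>w_j$; $\mathrm{Av}_s(212)$ is the set of $s$-words not containing $212$. The rank of a position $i$ of $w$ is the position of $(w_i,i)$ when all pairs $(w_k,k)$ are ordered by increasing value, ties broken by increasing index. The right-run at index $i$ is $w_i\cdots w_j$ with $w_i=\dots=w_j$ and $j=n$ or $w_j\ne w_{j+1}$; the left-run at index $i$ is $w_j\cdots w_i$ with $w_j=\dots=w_i$ and $j=1$ or $w_{j-1}\ne w_j$. A right-bump at index $i$ with distance $d\ge1$ moves the right-run at index $i$ to the right past the $d$ letters immediately to its right, all of which must be smaller than the run's value; a left-bump is symmetric using the left-run and the $d$ letters immediately to its left. The bump's rank is the rank of index $i$. For $w\in L$, a bump of given rank and direction is minimal if its distance is positive and smallest among such bumps producing a word in $L$. Algorithm B: visit $1^{s_1}\cdots m^{s_m}$; then repeatedly, from the last visited word, among minimal bumps whose result has not yet been visited choose the one of largest rank, preferring right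 over left for equal rank, apply it and visit the result; halt when no such bump exists. *)

theory Defs
  imports Main
begin

text \<open>Words are lists of naturals; positions are 0-based (position k here is position k+1
in the paper).  A direction is a bool: True = right, False = left.\<close>

definition swords :: "nat list \<Rightarrow> nat list set" where
  "swords s = {w. set w \<subseteq> {1..length s} \<and> (\<forall>i<length s. count_list w (i+1) = s!i)}"

definition contains212 :: "nat list \<Rightarrow> bool" where
  "contains212 w \<longleftrightarrow> (\<exists>i j k. i < j \<and> j < k \<and> k < length w \<and> w!i = w!k \<and> w!k > w!j)"

definition Av212 :: "nat list \<Rightarrow> nat list set" where
  "Av212 s = {w \<in> swords s. \<not> contains212 w}"

definition start_word :: "nat list \<Rightarrow> nat list" where
  "start_word s = concat (map (\<lambda>i. replicate (s!i) (i+1)) [0..<length s])"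

definition rank :: "nat list \<Rightarrow> nat \<Rightarrow> nat" where
  "rank w i = card {k. k < length w \<and> (w!k < w!i \<or> (w!k = w!i \<and> k < i))} + 1"

definition rrun_end :: "nat list \<Rightarrow> nat \<Rightarrow> nat" where
  "rrun_end w i = i + length (takeWhile (\<lambda>x. x = w!i) (drop i w))"

definition lrun_start :: "nat list \<Rightarrow> nat \<Rightarrow> nat" where
  "lrun_start w i = Suc i - length (takeWhile (\<lambda>x. x = w!i) (rev (take (Suc i) w)))"

definition bump :: "nat list \<Rightarrow> nat \<Rightarrow> bool \<Rightarrow> nat \<Rightarrow> nat list option" where
  "bump w i right d =
    (if right then
       (let e = rrun_end w i in
        if i < length w \<and> 1 \<le> d \<and> e + d \<le> length w \<and> (\<forall>t\<in>{e..<e+d}. w!t < w!i)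
        then Some (take i w @ take d (drop e w) @ take (e - i) (drop i w) @ drop (e + d) w)
        else None)
     else
       (let b = lrun_start w i in
        if i < length w \<and> 1 \<le> d \<and> d \<le> b \<and> (\<forall>t\<in>{b-d..<b}. w!t < w!i)
        then Some (take (b - d) w @ take (Suc i - b) (drop b w) @ take d (drop (b - d) w)
                   @ drop (Suc i) w)
        else None))"

definition bump_into :: "nat list set \<Rightarrow> nat list \<Rightarrow> nat \<Rightarrow> bool \<Rightarrow> nat \<Rightarrow> bool" where
  "bump_into L w i right d \<longleftrightarrow> (\<exists>v. bump w i right d = Some v \<and> v \<in> L)"

definition minbump :: "nat list set \<Rightarrow> nat list \<Rightarrow> nat \<Rightarrow> bool \<Rightarrow> nat list option" where
  "minbump L w i right =
    (if \<exists>d. bump_into L w i right d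
     then bump w i right (LEAST d. bump_into L w i right d) else None)"

text \<open>Priority key: larger rank first, right preferred over left at equal rank.\<close>
definition bkey :: "nat list \<Rightarrow> nat \<times> bool \<Rightarrow> nat" where
  "bkey w c = 2 * rank w (fst c) + (if snd c then 1 else 0)"

definition algB_step :: "nat list set \<Rightarrow> nat list list \<Rightarrow> nat list option" where
  "algB_step L vis =
    (let w = last vis;
         C = {(i, r). i < length w \<and> (\<exists>v. minbump L w i r = Some v \<and> v \<notin> set vis)}
     in if C = {} then None
        else (let c = (THE c. c \<in> C \<and> (\<forall>c'\<in>C. bkey w c' \<le> bkey w c))
              in minbump L w (fst c) (snd c)))"

fun algB_run :: "nat list set \<Rightarrow> nat list \<Rightarrow> nat \<Rightarrow> nat list list" where
  "algB_run L w0 0 = [w0]"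
| "algB_run L w0 (Suc k) =
     (case algB_step L (algB_run L w0 k) of None \<Rightarrow> algB_run L w0 k
      | Some v \<Rightarrow> algB_run L w0 k @ [v])"

end

theory Submission
  imports Defs
begin

lemma tw_rep: "takeWhile (\<lambda>x. x = c) (replicate k c @ B) = replicate k c @ takeWhile (\<lambda>x. x = c) B"
  by (induction k) auto

lemma tw_nohd: "B = [] \<or> hd B \<noteq> c \<Longrightarrow> takeWhile (\<lambda>x. x = c) B = []"
  by (cases B) auto

lemma rrun_end_dec:
  assumes "j < k" "B = [] \<or> hd B \<noteq> c"
  shows "rrun_end (A @ replicate k c @ B) (length A + j) = length A + k"
proof -
  have n: "(A @ replicate k c @ B) ! (length A + j) = c" using assms by (simp add: nth_append)
  have d: "drop (length A + j) (A @ replicate k c @ B) = replicate (k - j) c @ B" using assms(1) by simp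
  show ?thesis unfolding rrun_end_def n d tw_rep tw_nohd[OF assms(2)] using assms by simp
qed

lemma lrun_start_dec:
  assumes "j < k" "A = [] \<or> last A \<noteq> c"
  shows "lrun_start (A @ replicate k c @ B) (length A + j) = length A"
proof -
  have n: "(A @ replicate k c @ B) ! (length A + j) = c" using assms by (simp add: nth_append)
  have d: "rev (take (Suc (length A + j)) (A @ replicate k c @ B)) = replicate (Suc j) c @ rev A"
    using assms(1) by (simp add: min_def replicate_append_same)
  have "rev A = [] \<or> hd (rev A) \<noteq> c" using assms(2) by (cases A rule: rev_cases) auto
  then have "takeWhile (\<lambda>x. x = c) (rev A) = []" by (rule tw_nohd)
  then show ?thesis unfolding lrun_start_def n d tw_rep by simp
qed

lemma all_take_conv:
  assumes "d \<le> length B" "e = length A"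
  shows "(\<forall>t\<in>{e..<e+d}. (A @ B) ! t < c) \<longleftrightarrow> (\<forall>x\<in>set (take d B). x < c)"
proof -
  have "(\<forall>t\<in>{e..<e+d}. (A @ B) ! t < c) \<longleftrightarrow> (\<forall>i<d. B ! i < c)"
  proof
    assume h: "\<forall>t\<in>{e..<e+d}. (A @ B) ! t < c"
    show "\<forall>i<d. B ! i < c"
    proof (intro allI impI)
      fix i assume "i < d"
      then have "(A @ B) ! (e + i) < c" using h by simp
      then show "B ! i < c" using assms by (simp add: nth_append)
    qed
  next
    assume h: "\<forall>i<d. B ! i < c"
    show "\<forall>t\<in>{e..<e+d}. (A @ B) ! t < c"
    proof
      fix t assume t: "t \<in> {e..<e+d}"
      then have "B ! (t - e) < c" using h by auto
      then show "(A @ B) ! t < c" using t assms by (simp add: nth_append)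
    qed
  qed
  also have "\<dots> \<longleftrightarrow> (\<forall>x\<in>set (take d B). x < c)"
  proof
    assume h: "\<forall>i<d. B ! i < c"
    show "\<forall>x\<in>set (take d B). x < c" using h assms by (auto simp: in_set_conv_nth)
  next
    assume h: "\<forall>x\<in>set (take d B). x < c"
    show "\<forall>i<d. B ! i < c"
    proof (intro allI impI)
      fix i assume i: "i < d"
      have "take d B ! i \<in> set (take d B)" using i assms by (intro nth_mem) simp
      then show "B ! i < c" using h i by simp
    qed
  qed
  finally show ?thesis .
qed

lemma all_drop_conv:
  assumes "d \<le> length A"
  shows "(\<forall>t\<in>{length A - d..<length A}. (A @ B) ! t < c) \<longleftrightarrow> (\<forall>x\<in>set (drop (length A - d) A). x < c)"
proof -
  have "(\<forall>t\<in>{length A - d..<length A}. (A @ B) ! t < c) \<longleftrightarrow> (\<forall>t\<in>{length A - d..<length A}. A ! t < c)"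
    by (auto simp: nth_append)
  also have "\<dots> \<longleftrightarrow> (\<forall>x\<in>set (drop (length A - d) A). x < c)"
  proof
    assume h: "\<forall>t\<in>{length A - d..<length A}. A ! t < c"
    show "\<forall>x\<in>set (drop (length A - d) A). x < c"
    proof
      fix x assume "x \<in> set (drop (length A - d) A)"
      then obtain i where i: "i < length (drop (length A - d) A)" "x = drop (length A - d) A ! i"
        by (auto simp: in_set_conv_nth)
      then have "x = A ! (length A - d + i)" using assms by simp
      moreover have "length A - d + i \<in> {length A - d..<length A}" using i assms by (simp, arith)
      ultimately show "x < c" using h by blast
    qed
  next
    assume h: "\<forall>x\<in>set (drop (length A - d) A). x < c"
    show "\<forall>t\<in>{length A - d..<length A}. A ! t < c"
    proof
      fix t assume t: "t \<in> {length A - d..<length A}"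
      have m: "drop (length A - d) A ! (t - (length A - d)) \<in> set (drop (length A - d) A)"
        using t assms by (intro nth_mem) auto
      have "length A - d + (t - (length A - d)) = t" using t by auto
      moreover have "drop (length A - d) A ! (t - (length A - d)) = A ! (length A - d + (t - (length A - d)))"
        using t assms by (subst nth_drop) auto
      ultimately have "drop (length A - d) A ! (t - (length A - d)) = A ! t" by simp
      then show "A ! t < c" using h m by metis
    qed
  qed
  finally show ?thesis .
qed

lemma bump_right_dec:
  assumes "j < k" "B = [] \<or> hd B \<noteq> c"
  shows "bump (A @ replicate k c @ B) (length A + j) True d =
    (if 1 \<le> d \<and> d \<le> length B \<and> (\<forall>x\<in>set (take d B). x < c)
     then Some (A @ replicate j c @ take d B @ replicate (k-j) c @ drop d B) else None)"
proof -
  let ?w = "A @ replicate k c @ B"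
  have n: "?w ! (length A + j) = c" using assms by (simp add: nth_append)
  have w: "?w = (A @ replicate k c) @ B" by simp
  have cond: "(\<forall>t\<in>{length A + k..<length A + k + d}. ?w ! t < c) \<longleftrightarrow> (\<forall>x\<in>set (take d B). x < c)"
    if "d \<le> length B"
    using all_take_conv[of d B "length A + k" "A @ replicate k c" c] that by simp
  have r: "take (length A + j) ?w @ take d (drop (length A + k) ?w) @
      take (length A + k - (length A + j)) (drop (length A + j) ?w) @ drop (length A + k + d) ?w
      = A @ replicate j c @ take d B @ replicate (k-j) c @ drop d B"
    using assms(1) by (simp add: min_def)
  show ?thesis
    unfolding bump_def Let_def rrun_end_dec[OF assms] n r using assms(1) cond by auto
qed

lemma bump_left_dec:
  assumes "j < k" "A = [] \<or> last A \<noteq> c"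
  shows "bump (A @ replicate k c @ B) (length A + j) False d =
    (if 1 \<le> d \<and> d \<le> length A \<and> (\<forall>x\<in>set (drop (length A - d) A). x < c)
     then Some (take (length A - d) A @ replicate (Suc j) c @ drop (length A - d) A @ replicate (k - Suc j) c @ B)
     else None)"
proof -
  let ?w = "A @ replicate k c @ B"
  have n: "?w ! (length A + j) = c" using assms by (simp add: nth_append)
  have cond: "(\<forall>t\<in>{length A - d..<length A}. ?w ! t < c) \<longleftrightarrow> (\<forall>x\<in>set (drop (length A - d) A). x < c)"
    if "d \<le> length A"
    using all_drop_conv[of d A "replicate k c @ B" c] that by simp
  have r: "d \<le> length A \<Longrightarrow> take (length A - d) ?w @ take (Suc (length A + j) - length A) (drop (length A) ?w) @
      take d (drop (length A - d) ?w) @ drop (Suc (length A + j)) ?w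
      = take (length A - d) A @ replicate (Suc j) c @ drop (length A - d) A @ replicate (k - Suc j) c @ B"
    using assms(1) by (simp add: min_def)
  show ?thesis
    unfolding bump_def Let_def lrun_start_dec[OF assms] n using assms(1) cond r by auto
qed

lemma rrun_end_bounds:
  assumes "i < length u" shows "i < rrun_end u i \<and> rrun_end u i \<le> length u"
proof -
  have d: "drop i u = u ! i # drop (Suc i) u" using assms by (simp add: Cons_nth_drop_Suc)
  have "length (takeWhile (\<lambda>x. x = u ! i) (drop i u)) \<le> length (drop i u)" by (rule length_takeWhile_le)
  then show ?thesis unfolding rrun_end_def using assms by (simp add: d)
qed

lemma lrun_start_le:
  assumes "i < length u" shows "lrun_start u i \<le> i"
proof -
  have "rev (take (Suc i) u) = u ! i # rev (take i u)" using assms by (simp add: take_Suc_conv_app_nth)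
  then show ?thesis unfolding lrun_start_def by simp
qed

lemma bump_Some_R:
  assumes "bump u i True d = Some v"
  shows "length v = length u \<and> i < length u \<and> 1 \<le> d"
proof -
  let ?e = "rrun_end u i"
  have c: "i < length u \<and> 1 \<le> d \<and> ?e + d \<le> length u" and
    v: "v = take i u @ take d (drop ?e u) @ take (?e - i) (drop i u) @ drop (?e + d) u"
    using assms unfolding bump_def Let_def by (auto split: if_splits)
  have b: "i < ?e \<and> ?e \<le> length u" using rrun_end_bounds c by blast
  show ?thesis using c b unfolding v by (simp add: min_def, arith)
qed

lemma bump_Some_L:
  assumes "bump u i False d = Some v"
  shows "length v = length u \<and> i < length u \<and> 1 \<le> d"
proof -
  let ?b = "lrun_start u i"
  have c: "i < length u \<and> 1 \<le> d \<and> d \<le> ?b" and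
    v: "v = take (?b - d) u @ take (Suc i - ?b) (drop ?b u) @ take d (drop (?b - d) u) @ drop (Suc i) u"
    using assms unfolding bump_def Let_def by (auto split: if_splits)
  have b: "?b \<le> i" using lrun_start_le c by blast
  show ?thesis using c b unfolding v by (simp add: min_def, arith)
qed

lemma bump_Some:
  assumes "bump u i r d = Some v"
  shows "length v = length u \<and> i < length u \<and> 1 \<le> d"
  using assms bump_Some_R bump_Some_L by (cases r) auto

lemma rrun_end_prefix: "rrun_end (P @ u) (length P + i) = length P + rrun_end u i"
  unfolding rrun_end_def by (simp add: nth_append)

lemma lrun_start_prefix:
  assumes "i < length u" "P = [] \<or> last P \<noteq> u ! i"
  shows "lrun_start (P @ u) (length P + i) = length P + lrun_start u i"
proof -
  let ?X = "rev (take (Suc i) u)"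
  let ?c = "u ! i"
  have t: "rev (take (Suc (length P + i)) (P @ u)) = ?X @ rev P" by simp
  have n: "(P @ u) ! (length P + i) = ?c" by (simp add: nth_append)
  have lx: "length ?X = Suc i" using assms by simp
  have rp: "rev P = [] \<or> hd (rev P) \<noteq> ?c" using assms(2) by (cases P rule: rev_cases) auto
  show ?thesis
  proof (cases "\<forall>x\<in>set ?X. x = ?c")
    case True
    then have e1: "takeWhile (\<lambda>x. x = ?c) (?X @ rev P) = ?X"
      using tw_nohd[OF rp] by (simp only: takeWhile_append) simp
    have e2: "takeWhile (\<lambda>x. x = ?c) ?X = ?X" using True by (simp only: takeWhile_eq_all_conv)
    show ?thesis unfolding lrun_start_def t n e1 e2 using lx by simp
  next
    case False
    then obtain x where "x \<in> set ?X" "x \<noteq> ?c" by blast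
    then have "takeWhile (\<lambda>x. x = ?c) (?X @ rev P) = takeWhile (\<lambda>x. x = ?c) ?X" by simp
    moreover have "length (takeWhile (\<lambda>x. x = ?c) ?X) \<le> Suc i"
      using length_takeWhile_le[of _ ?X] lx by simp
    ultimately show ?thesis unfolding lrun_start_def t n by simp
  qed
qed

lemma rrun_end_suffix:
  assumes "i < length u" "Q = [] \<or> hd Q \<noteq> u ! i"
  shows "rrun_end (u @ Q) i = rrun_end u i"
proof -
  let ?X = "drop i u"
  let ?c = "u ! i"
  have t: "drop i (u @ Q) = ?X @ Q" using assms by simp
  have n: "(u @ Q) ! i = ?c" using assms by (simp add: nth_append)
  show ?thesis
  proof (cases "\<forall>x\<in>set ?X. x = ?c")
    case True
    then have e1: "takeWhile (\<lambda>x. x = ?c) (?X @ Q) = ?X"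
      using tw_nohd[OF assms(2)] by (simp only: takeWhile_append) simp
    have e2: "takeWhile (\<lambda>x. x = ?c) ?X = ?X" using True by (simp only: takeWhile_eq_all_conv)
    show ?thesis unfolding rrun_end_def t n e1 e2 by simp
  next
    case False
    then obtain x where "x \<in> set ?X" "x \<noteq> ?c" by blast
    then have "takeWhile (\<lambda>x. x = ?c) (?X @ Q) = takeWhile (\<lambda>x. x = ?c) ?X" by simp
    then show ?thesis unfolding rrun_end_def t n by simp
  qed
qed

lemma lrun_start_suffix:
  assumes "i < length u" shows "lrun_start (u @ Q) i = lrun_start u i"
  unfolding lrun_start_def using assms by (simp add: nth_append)

lemma shift_all:
  "(\<forall>t\<in>{length P + x..<length P + y}. (P @ u) ! t < c) \<longleftrightarrow> (\<forall>t\<in>{x..<y}. u ! t < c)"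
proof
  assume h: "\<forall>t\<in>{length P + x..<length P + y}. (P @ u) ! t < c"
  show "\<forall>t\<in>{x..<y}. u ! t < c"
  proof
    fix t assume "t \<in> {x..<y}"
    then have "(P @ u) ! (length P + t) < c" using h[rule_format, of "length P + t"] by auto
    then show "u ! t < c" by (simp add: nth_append)
  qed
next
  assume h: "\<forall>t\<in>{x..<y}. u ! t < c"
  show "\<forall>t\<in>{length P + x..<length P + y}. (P @ u) ! t < c"
  proof
    fix t assume t: "t \<in> {length P + x..<length P + y}"
    then have "t - length P \<in> {x..<y}" by auto
    then have "u ! (t - length P) < c" using h by blast
    then show "(P @ u) ! t < c" using t by (simp add: nth_append)
  qed
qed

lemma bump_prefix_R:
  assumes "i < length u" "\<forall>x\<in>set P. u ! i < x"
  shows "bump (P @ u) (length P + i) True d = map_option ((@) P) (bump u i True d)"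
proof -
  let ?e = "rrun_end u i"
  have b: "i < ?e \<and> ?e \<le> length u" using rrun_end_bounds assms(1) by blast
  have n: "(P @ u) ! (length P + i) = u ! i" by (simp add: nth_append)
  have sh: "(\<forall>t\<in>{length P + ?e..<length P + ?e + d}. (P @ u) ! t < u ! i) \<longleftrightarrow> (\<forall>t\<in>{?e..<?e+d}. u ! t < u ! i)"
    using shift_all[of P ?e "?e + d" u "u ! i"] by (simp add: add.assoc)
  have r: "take (length P + i) (P @ u) @ take d (drop (length P + ?e) (P @ u)) @
     take (length P + ?e - (length P + i)) (drop (length P + i) (P @ u)) @ drop (length P + ?e + d) (P @ u)
     = P @ (take i u @ take d (drop ?e u) @ take (?e - i) (drop i u) @ drop (?e + d) u)"
    by (simp add: add.assoc)
  show ?thesis unfolding bump_def Let_def rrun_end_prefix n sh r using assms(1) by auto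
qed

lemma bump_prefix_L:
  assumes "i < length u" "\<forall>x\<in>set P. u ! i < x"
  shows "bump (P @ u) (length P + i) False d = map_option ((@) P) (bump u i False d)"
proof -
  let ?b = "lrun_start u i"
  have b: "?b \<le> i" using lrun_start_le assms(1) by blast
  have lp: "P = [] \<or> last P \<noteq> u ! i" using assms(2) by (cases P rule: rev_cases) auto
  have n: "(P @ u) ! (length P + i) = u ! i" by (simp add: nth_append)
  have cond: "(d \<le> length P + ?b \<and> (\<forall>t\<in>{length P + ?b - d..<length P + ?b}. (P @ u) ! t < u ! i))
     \<longleftrightarrow> (d \<le> ?b \<and> (\<forall>t\<in>{?b - d..<?b}. u ! t < u ! i))"
  proof (cases "d \<le> ?b")
    case True
    then have "length P + ?b - d = length P + (?b - d)" by simp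
    then show ?thesis using True shift_all[of P "?b - d" ?b u "u ! i"] by simp
  next
    case False
    have "\<not> (d \<le> length P + ?b \<and> (\<forall>t\<in>{length P + ?b - d..<length P + ?b}. (P @ u) ! t < u ! i))"
    proof
      assume h: "d \<le> length P + ?b \<and> (\<forall>t\<in>{length P + ?b - d..<length P + ?b}. (P @ u) ! t < u ! i)"
      then have P0: "P \<noteq> []" using False by auto
      have "length P - 1 \<in> {length P + ?b - d..<length P + ?b}" using h False P0 by auto
      then have "(P @ u) ! (length P - 1) < u ! i" using h by blast
      moreover have "(P @ u) ! (length P - 1) = P ! (length P - 1)" using P0 by (simp add: nth_append)
      moreover have "P ! (length P - 1) \<in> set P" using P0 by simp
      ultimately show False using assms(2) by fastforce
    qed
    then show ?thesis using False by blast
  qed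
  have r: "d \<le> ?b \<Longrightarrow> take (length P + ?b - d) (P @ u) @ take (Suc (length P + i) - (length P + ?b)) (drop (length P + ?b) (P @ u)) @
     take d (drop (length P + ?b - d) (P @ u)) @ drop (Suc (length P + i)) (P @ u)
     = P @ (take (?b - d) u @ take (Suc i - ?b) (drop ?b u) @ take d (drop (?b - d) u) @ drop (Suc i) u)"
  proof -
    assume "d \<le> ?b"
    then have "length P + ?b - d = length P + (?b - d)" by simp
    then show ?thesis using b by simp
  qed
  show ?thesis unfolding bump_def Let_def lrun_start_prefix[OF assms(1) lp] n
    using assms(1) cond r by auto
qed

lemma bump_prefix:
  assumes "i < length u" "\<forall>x\<in>set P. u ! i < x"
  shows "bump (P @ u) (length P + i) r d = map_option ((@) P) (bump u i r d)"
  using bump_prefix_R[OF assms] bump_prefix_L[OF assms] by (cases r) auto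

lemma bump_suffix_R:
  assumes "i < length u" "\<forall>x\<in>set Q. u ! i < x"
  shows "bump (u @ Q) i True d = map_option (\<lambda>v. v @ Q) (bump u i True d)"
proof -
  have hq: "Q = [] \<or> hd Q \<noteq> u ! i" using assms(2) by (cases Q) auto
  let ?e = "rrun_end u i"
  have b: "i < ?e \<and> ?e \<le> length u" using rrun_end_bounds assms(1) by blast
  have n: "(u @ Q) ! i = u ! i" using assms(1) by (simp add: nth_append)
  have cond: "(?e + d \<le> length (u @ Q) \<and> (\<forall>t\<in>{?e..<?e+d}. (u @ Q) ! t < u ! i))
     \<longleftrightarrow> (?e + d \<le> length u \<and> (\<forall>t\<in>{?e..<?e+d}. u ! t < u ! i))"
  proof (cases "?e + d \<le> length u")
    case True
    then show ?thesis by (auto simp: nth_append)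
  next
    case False
    have "\<not> (?e + d \<le> length (u @ Q) \<and> (\<forall>t\<in>{?e..<?e+d}. (u @ Q) ! t < u ! i))"
    proof
      assume h: "?e + d \<le> length (u @ Q) \<and> (\<forall>t\<in>{?e..<?e+d}. (u @ Q) ! t < u ! i)"
      then have Q0: "Q \<noteq> []" using False by auto
      have "length u \<in> {?e..<?e+d}" using False b by auto
      then have "(u @ Q) ! (length u) < u ! i" using h by blast
      moreover have "(u @ Q) ! (length u) = hd Q" using Q0 by (simp add: nth_append hd_conv_nth)
      moreover have "hd Q \<in> set Q" using Q0 by simp
      ultimately show False using assms(2) by fastforce
    qed
    then show ?thesis using False by blast
  qed
  have r: "?e + d \<le> length u \<Longrightarrow> take i (u @ Q) @ take d (drop ?e (u @ Q)) @ take (?e - i) (drop i (u @ Q)) @ drop (?e + d) (u @ Q)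
     = (take i u @ take d (drop ?e u) @ take (?e - i) (drop i u) @ drop (?e + d) u) @ Q"
    using b by simp
  show ?thesis unfolding bump_def Let_def rrun_end_suffix[OF assms(1) hq] n
    using assms(1) cond r by auto
qed

lemma bump_suffix_L:
  assumes "i < length u" "\<forall>x\<in>set Q. u ! i < x"
  shows "bump (u @ Q) i False d = map_option (\<lambda>v. v @ Q) (bump u i False d)"
proof -
  let ?b = "lrun_start u i"
  have b: "?b \<le> i" using lrun_start_le assms(1) by blast
  have n: "(u @ Q) ! i = u ! i" using assms(1) by (simp add: nth_append)
  have cond: "(\<forall>t\<in>{?b - d..<?b}. (u @ Q) ! t < u ! i) \<longleftrightarrow> (\<forall>t\<in>{?b - d..<?b}. u ! t < u ! i)"
    using b assms(1) by (auto simp: nth_append)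
  have r: "d \<le> ?b \<Longrightarrow> take (?b - d) (u @ Q) @ take (Suc i - ?b) (drop ?b (u @ Q)) @
     take d (drop (?b - d) (u @ Q)) @ drop (Suc i) (u @ Q)
     = (take (?b - d) u @ take (Suc i - ?b) (drop ?b u) @ take d (drop (?b - d) u) @ drop (Suc i) u) @ Q"
    using b assms(1) by simp
  show ?thesis unfolding bump_def Let_def lrun_start_suffix[OF assms(1)] n
    using assms(1) cond r by auto
qed

lemma bump_suffix:
  assumes "i < length u" "\<forall>x\<in>set Q. u ! i < x"
  shows "bump (u @ Q) i r d = map_option (\<lambda>v. v @ Q) (bump u i r d)"
  using bump_suffix_R[OF assms] bump_suffix_L[OF assms] by (cases r) auto

definition insb :: "nat \<Rightarrow> nat \<Rightarrow> nat list \<Rightarrow> nat \<Rightarrow> nat list" where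
  "insb a m u p = take p u @ replicate a m @ drop p u"

lemma length_insb: "p \<le> length u \<Longrightarrow> length (insb a m u p) = length u + a"
  unfolding insb_def by simp

lemma nth_insb:
  assumes "p \<le> length u" "t < length u + a"
  shows "insb a m u p ! t = (if t < p then u ! t else if t < p + a then m else u ! (t - a))"
  using assms unfolding insb_def by (auto simp: nth_append min_def)

lemma insb_0: "insb a m u 0 = replicate a m @ u"
  unfolding insb_def by simp

lemma insb_len: "insb a m u (length u) = u @ replicate a m"
  unfolding insb_def by simp

lemma contains212_intro:
  assumes "y \<in> set Y" "y < c"
  shows "contains212 (X @ c # Y @ c # Z)"
proof -
  obtain Y1 Y2 where Y: "Y = Y1 @ y # Y2" using split_list[OF assms(1)] by blast
  let ?w = "X @ c # Y @ c # Z"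
  have 1: "?w ! length X = c" by simp
  have 2: "?w ! (length X + 1 + length Y1) = y" unfolding Y
    by (simp add: nth_append)
  have 3: "?w ! (length X + 1 + length Y) = c"
    by (simp add: nth_append)
  have 4: "length X + 1 + length Y < length ?w" by simp
  show ?thesis unfolding contains212_def
    apply (rule exI[of _ "length X"], rule exI[of _ "length X + 1 + length Y1"], rule exI[of _ "length X + 1 + length Y"])
    using 1 2 3 4 assms(2) unfolding Y by simp
qed

lemma insb_212:
  assumes lt: "\<forall>y\<in>set u. y < m" and p: "p \<le> length u"
  shows "contains212 (insb a m u p) \<longleftrightarrow> contains212 u"
proof
  assume "contains212 u"
  then obtain i j k where ijk: "i < j" "j < k" "k < length u" "u ! i = u ! k" "u ! k > u ! j"
    unfolding contains212_def by blast
  define f where "f t = (if t < p then t else t + a)" for t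
  have fm: "f x < f y" if "x < y" for x y using that unfolding f_def by auto
  have fl: "f t < length u + a" if "t < length u" for t using that unfolding f_def by auto
  have fn: "insb a m u p ! f t = u ! t" if "t < length u" for t
    using that p unfolding f_def by (auto simp: nth_insb)
  show "contains212 (insb a m u p)" unfolding contains212_def
    apply (rule exI[of _ "f i"], rule exI[of _ "f j"], rule exI[of _ "f k"])
    using ijk fm fl fn p by (simp add: length_insb)
next
  assume "contains212 (insb a m u p)"
  then obtain i j k where ijk: "i < j" "j < k" "k < length u + a"
    "insb a m u p ! i = insb a m u p ! k" "insb a m u p ! k > insb a m u p ! j"
    unfolding contains212_def using length_insb[OF p] by auto
  let ?w = "insb a m u p"
  have nth: "?w ! t = (if t < p then u ! t else if t < p + a then m else u ! (t - a))"
    if "t < length u + a" for t using nth_insb[OF p that] .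
  have ltn: "u ! t' < m" if "t' < length u" for t' using lt that by simp
  have le: "?w ! t \<le> m" if "t < length u + a" for t
    using nth[OF that] ltn[of t] ltn[of "t - a"] that p by (auto simp: less_imp_le)
  have blk: "p \<le> t \<and> t < p + a" if "t < length u + a" "?w ! t = m" for t
  proof (rule ccontr)
    assume "\<not> (p \<le> t \<and> t < p + a)"
    then have "?w ! t < m" using nth[OF that(1)] ltn[of t] ltn[of "t - a"] that(1) p by auto
    then show False using that(2) by simp
  qed
  show "contains212 u"
  proof (cases "?w ! k = m")
    case True
    have "p \<le> i" using blk[of i] ijk True by auto
    moreover have "k < p + a" using blk[of k] ijk True by auto
    ultimately have "?w ! j = m" using nth[of j] ijk by auto
    then show ?thesis using ijk True by simp
  next
    case False
    have nk: "?w ! k < m" using le[of k] ijk False by simp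
    have nj: "?w ! j < m" using nk ijk by simp
    have ni: "?w ! i < m" using nk ijk by simp
    define g where "g t = (if t < p then t else t - a)" for t
    have nb: "t < p \<or> p + a \<le> t" if "t < length u + a" "?w ! t < m" for t
      using nth[OF that(1)] that(2) by (auto split: if_splits)
    have gn: "?w ! t = u ! g t" if "t < p \<or> p + a \<le> t" "t < length u + a" for t
      using that nth[OF that(2)] unfolding g_def by auto
    have gl: "g t < length u" if "t < p \<or> p + a \<le> t" "t < length u + a" for t
      using that p unfolding g_def by auto
    have gm: "g x < g y" if "x < y" "x < p \<or> p + a \<le> x" "y < p \<or> p + a \<le> y" for x y
      using that unfolding g_def by auto
    have bi: "i < p \<or> p + a \<le> i" using nb[of i] ni ijk by simp
    have bj: "j < p \<or> p + a \<le> j" using nb[of j] nj ijk by simp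
    have bk: "k < p \<or> p + a \<le> k" using nb[of k] nk ijk by simp
    show ?thesis unfolding contains212_def
      apply (rule exI[of _ "g i"], rule exI[of _ "g j"], rule exI[of _ "g k"])
      using ijk gm[OF _ bi bj] gm[OF _ bj bk] gl[OF bk] gn[OF bi] gn[OF bj] gn[OF bk] by simp
  qed
qed

lemma swords_lt: "u \<in> swords s \<Longrightarrow> \<forall>y\<in>set u. y < Suc (length s)"
  unfolding swords_def by auto

lemma count_insb: "p \<le> length u \<Longrightarrow> count_list (insb a m u p) v = count_list u v + (if v = m then a else 0)"
proof -
  assume p: "p \<le> length u"
  have "count_list (insb a m u p) v = count_list (take p u) v + count_list (replicate a m) v + count_list (drop p u) v"
    unfolding insb_def by simp
  moreover have "count_list (take p u) v + count_list (drop p u) v = count_list u v"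
    using count_list_append[of "take p u" "drop p u" v] by simp
  moreover have "count_list (replicate a m) v = (if v = m then a else 0)"
    by (induction a) auto
  ultimately show ?thesis by simp
qed

lemma set_insb: "p \<le> length u \<Longrightarrow> 0 < a \<Longrightarrow> set (insb a m u p) = insert m (set u)"
proof -
  assume "p \<le> length u" "0 < a"
  have "set u = set (take p u) \<union> set (drop p u)" using append_take_drop_id[of p u] set_append by metis
  then show ?thesis unfolding insb_def using \<open>0 < a\<close> by auto
qed

lemma swords_insb:
  assumes a: "0 < a" and p: "p \<le> length u"
  shows "insb a (Suc (length s)) u p \<in> swords (s @ [a]) \<longleftrightarrow> u \<in> swords s"
proof -
  let ?m = "Suc (length s)"
  have st: "set (insb a ?m u p) = insert ?m (set u)" using set_insb[OF p a] .
  have ct: "count_list (insb a ?m u p) v = count_list u v + (if v = ?m then a else 0)" for v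
    using count_insb[OF p] .
  show ?thesis
  proof
    assume h: "insb a ?m u p \<in> swords (s @ [a])"
    have c1: "count_list u ?m = 0"
      using h ct[of ?m] unfolding swords_def by (auto dest!: spec[of _ "length s"])
    then have "?m \<notin> set u" by (simp add: count_list_0_iff)
    moreover have "set u \<subseteq> {1..Suc (length s)}" using h st unfolding swords_def by auto
    ultimately have "set u \<subseteq> {1..length s}" by (fastforce simp: subset_iff le_Suc_eq)
    moreover have "count_list u (i+1) = s ! i" if "i < length s" for i
    proof -
      have "count_list (insb a ?m u p) (i+1) = (s @ [a]) ! i" using h that unfolding swords_def by auto
      then show ?thesis using ct[of "i+1"] that by (simp add: nth_append)
    qed
    ultimately show "u \<in> swords s" unfolding swords_def by auto
  next
    assume h: "u \<in> swords s"
    have "?m \<notin> set u" using h unfolding swords_def by auto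
    then have c1: "count_list u ?m = 0" by simp
    have "set (insb a ?m u p) \<subseteq> {1..length (s @ [a])}" using h st unfolding swords_def by auto
    moreover have "count_list (insb a ?m u p) (i+1) = (s @ [a]) ! i" if "i < length (s @ [a])" for i
    proof (cases "i < length s")
      case True
      then show ?thesis using h ct[of "i+1"] unfolding swords_def by (auto simp: nth_append)
    next
      case False
      then have "i = length s" using that by simp
      then show ?thesis using c1 ct[of "i+1"] by simp
    qed
    ultimately show "insb a ?m u p \<in> swords (s @ [a])" unfolding swords_def by blast
  qed
qed

lemma Av_insb:
  assumes a: "0 < a" and p: "p \<le> length u"
  shows "insb a (Suc (length s)) u p \<in> Av212 (s @ [a]) \<longleftrightarrow> u \<in> Av212 s"
proof
  assume h: "insb a (Suc (length s)) u p \<in> Av212 (s @ [a])"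
  then have u: "u \<in> swords s" using swords_insb[OF a p] unfolding Av212_def by auto
  then show "u \<in> Av212 s" using h insb_212[OF swords_lt[OF u] p] unfolding Av212_def by auto
next
  assume h: "u \<in> Av212 s"
  then have u: "u \<in> swords s" unfolding Av212_def by auto
  then show "insb a (Suc (length s)) u p \<in> Av212 (s @ [a])"
    using h insb_212[OF swords_lt[OF u] p] swords_insb[OF a p] unfolding Av212_def by auto
qed

lemma tw_eq_rep: "takeWhile (\<lambda>y. y = m) R = replicate (length (takeWhile (\<lambda>y. y = m) R)) m"
  by (induction R) auto

lemma Av_dec:
  assumes a: "0 < a" and w: "w \<in> Av212 (s @ [a])"
  shows "\<exists>u p. p \<le> length u \<and> w = insb a (Suc (length s)) u p \<and> u \<in> Av212 s"
proof -
  let ?m = "Suc (length s)"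
  have ws: "w \<in> swords (s @ [a])" and n212: "\<not> contains212 w" using w unfolding Av212_def by auto
  have cm: "count_list w ?m = a" using ws unfolding swords_def by (auto dest!: spec[of _ "length s"])
  have le: "\<forall>y\<in>set w. y \<le> ?m" using ws unfolding swords_def by auto
  have "?m \<in> set w" using cm a count_notin by fastforce
  then obtain A R where wAR: "w = A @ ?m # R" and nA: "?m \<notin> set A" using split_list_first by metis
  define T1 where "T1 = takeWhile (\<lambda>y. y = ?m) R"
  define R2 where "R2 = dropWhile (\<lambda>y. y = ?m) R"
  have R: "R = T1 @ R2" unfolding T1_def R2_def by simp
  have T1: "T1 = replicate (length T1) ?m" unfolding T1_def by (rule tw_eq_rep)
  have nR2: "?m \<notin> set R2"
  proof
    assume mR2: "?m \<in> set R2"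
    then have ne: "R2 \<noteq> []" by auto
    have hd: "hd R2 \<noteq> ?m" using hd_dropWhile ne unfolding R2_def by blast
    have R2c: "R2 = hd R2 # tl R2" using ne by simp
    then have "?m \<in> set (tl R2)" using mR2 hd by (metis set_ConsD)
    then obtain Y2 Z where tl: "tl R2 = Y2 @ ?m # Z" using split_list by metis
    have "hd R2 \<in> set w" using wAR R R2c by (metis Un_iff list.set_intros(1) set_append set_subset_Cons subsetD)
    then have "hd R2 < ?m" using le hd by fastforce
    moreover have "w = A @ ?m # (T1 @ hd R2 # Y2) @ ?m # Z" using wAR R R2c tl by simp
    ultimately have "contains212 w" using contains212_intro[of "hd R2" "T1 @ hd R2 # Y2" ?m A Z] by simp
    then show False using n212 by simp
  qed
  have cr: "count_list (replicate n c) c = n" for n c by (induction n) auto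
  have cT1: "count_list T1 ?m = length T1"
    using arg_cong[OF T1, of "\<lambda>l. count_list l ?m"] cr by simp
  have "count_list w ?m = Suc (length T1)"
    using wAR R nA nR2 cT1 by simp
  then have lT1: "Suc (length T1) = a" using cm by simp
  have "w = A @ replicate a ?m @ R2" using wAR R T1 lT1
    by (metis append_Cons append_self_conv2 replicate_Suc)
  then have "w = insb a ?m (A @ R2) (length A)" unfolding insb_def by simp
  moreover have "A @ R2 \<in> Av212 s" using Av_insb[OF a, of "length A" "A @ R2" s] w calculation by simp
  ultimately show ?thesis by (intro exI[of _ "A @ R2"] exI[of _ "length A"]) simp
qed

lemma insb_inj:
  assumes a: "0 < a" and "m \<notin> set u" "m \<notin> set u'" "p \<le> length u" "p' \<le> length u'"
    and eq: "insb a m u p = insb a m u' p'"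
  shows "u = u' \<and> p = p'"
proof -
  have f: "filter (\<lambda>y. y \<noteq> m) (insb a m x q) = x" if "m \<notin> set x" for x q
  proof -
    have "filter (\<lambda>y. y \<noteq> m) (insb a m x q) = filter (\<lambda>y. y \<noteq> m) (take q x) @ filter (\<lambda>y. y \<noteq> m) (drop q x)"
      unfolding insb_def by simp
    also have "\<dots> = filter (\<lambda>y. y \<noteq> m) (take q x @ drop q x)" by (simp only: filter_append)
    also have "\<dots> = x" using that by (auto simp: filter_id_conv)
    finally show ?thesis .
  qed
  have t: "length (takeWhile (\<lambda>y. y \<noteq> m) (insb a m x q)) = q" if "m \<notin> set x" "q \<le> length x" for x q
  proof -
    have "\<forall>y\<in>set (take q x). y \<noteq> m" using that(1) in_set_takeD by fastforce
    then have "takeWhile (\<lambda>y. y \<noteq> m) (insb a m x q) = take q x @ takeWhile (\<lambda>y. y \<noteq> m) (replicate a m @ drop q x)"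
      unfolding insb_def by (simp add: takeWhile_append2)
    also have "\<dots> = take q x" using a by (cases a) auto
    finally show ?thesis using that(2) by simp
  qed
  show ?thesis using f[of u p] f[of u' p'] t[of u p] t[of u' p'] assms by metis
qed

lemma swords_length: "w \<in> swords s \<Longrightarrow> length w = sum_list s"
proof -
  assume w: "w \<in> swords s"
  have "length w = sum (count_list w) {1..length s}"
    using sum_count_set[of w "{1..length s}"] w unfolding swords_def by auto
  also have "{1..length s} = Suc ` {..<length s}" by (simp add: image_Suc_lessThan)
  also have "sum (count_list w) (Suc ` {..<length s}) = (\<Sum>i<length s. count_list w (Suc i))"
    by (subst sum.reindex) auto
  also have "\<dots> = (\<Sum>i<length s. s ! i)" using w unfolding swords_def by (auto intro: sum.cong)
  also have "\<dots> = sum_list s" by (simp add: sum_list_sum_nth lessThan_atLeast0)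
  finally show ?thesis .
qed

lemma start_word_snoc:
  "start_word (s @ [a]) = start_word s @ replicate a (Suc (length s))"
proof -
  have e: "map (\<lambda>i. replicate ((s @ [a]) ! i) (Suc i)) [0..<length s] = map (\<lambda>i. replicate (s ! i) (Suc i)) [0..<length s]"
    by (auto simp: nth_append)
  show ?thesis unfolding start_word_def by (simp add: e)
qed

lemma start_word_in: "\<forall>x\<in>set s. 0 < x \<Longrightarrow> start_word s \<in> Av212 s"
proof (induction s rule: rev_induct)
  case Nil
  then show ?case unfolding start_word_def Av212_def swords_def contains212_def by simp
next
  case (snoc a s)
  have "start_word (s @ [a]) = insb a (Suc (length s)) (start_word s) (length (start_word s))"
    by (simp add: start_word_snoc insb_len)
  then show ?case using Av_insb[of a "length (start_word s)" "start_word s" s] snoc by simp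
qed

definition rset :: "nat list \<Rightarrow> nat \<Rightarrow> nat set" where
  "rset w i = {k. k < length w \<and> (w!k < w!i \<or> (w!k = w!i \<and> k < i))}"

lemma rank_rset: "rank w i = card (rset w i) + 1"
  unfolding rank_def rset_def by simp

lemma finite_rset: "finite (rset w i)"
  unfolding rset_def by auto

lemma rank_less:
  assumes "i < length w" "w!i < w!j \<or> (w!i = w!j \<and> i < j)"
  shows "rank w i < rank w j"
proof -
  have "rset w i \<subset> rset w j"
  proof
    show "rset w i \<subseteq> rset w j" using assms(2) unfolding rset_def by auto
    have "i \<in> rset w j" "i \<notin> rset w i" using assms unfolding rset_def by auto
    then show "rset w i \<noteq> rset w j" by blast
  qed
  then have "card (rset w i) < card (rset w j)" using finite_rset by (rule psubset_card_mono[rotated])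
  then show ?thesis unfolding rank_rset by simp
qed

lemma rank_inj:
  assumes "i < length w" "j < length w" "rank w i = rank w j"
  shows "i = j"
proof (rule ccontr)
  assume "i \<noteq> j"
  then have "(w!i < w!j \<or> (w!i = w!j \<and> i < j)) \<or> (w!j < w!i \<or> (w!j = w!i \<and> j < i))"
    by (metis linorder_neqE_nat)
  then show False using rank_less[of i w j] rank_less[of j w i] assms by auto
qed

lemma bkey_inj:
  assumes "fst c < length w" "fst c' < length w" "bkey w c = bkey w c'"
  shows "c = c'"
proof -
  have "snd c = snd c' \<and> rank w (fst c) = rank w (fst c')"
    using assms(3) unfolding bkey_def by (cases "snd c"; cases "snd c'") presburger+
  then show ?thesis using rank_inj[OF assms(1,2)] by (simp add: prod_eq_iff)
qed

lemma filter_insb: "\<forall>y\<in>set u. y < m \<Longrightarrow> filter (\<lambda>y. y < m) (insb a m u p) = u"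
proof -
  assume h: "\<forall>y\<in>set u. y < m"
  have "filter (\<lambda>y. y < m) (insb a m u p) = filter (\<lambda>y. y < m) (take p u) @ filter (\<lambda>y. y < m) (drop p u)"
    unfolding insb_def by simp
  also have "\<dots> = filter (\<lambda>y. y < m) (take p u @ drop p u)" by (simp only: filter_append)
  also have "\<dots> = u" using h by (auto simp: filter_id_conv)
  finally show ?thesis .
qed

lemma rank_insb:
  assumes lt: "\<forall>y\<in>set u. y < m" and p: "p \<le> length u" and t: "t < length u + a"
  shows "(t < p \<or> p + a \<le> t) \<Longrightarrow> rank (insb a m u p) t \<le> length u"
    and "(p \<le> t \<and> t < p + a) \<Longrightarrow> length u + 1 \<le> rank (insb a m u p) t"
proof -
  let ?w = "insb a m u p"
  let ?K = "{k. k < length ?w \<and> ?w ! k < m}"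
  have cK: "card ?K = length u"
    using length_filter_conv_card[of "\<lambda>y. y < m" ?w] filter_insb[OF lt] by simp
  have fK: "finite ?K" by auto
  have lw: "length ?w = length u + a" using length_insb[OF p] .
  have ltn: "u ! t' < m" if "t' < length u" for t' using lt that by simp
  have nth: "?w ! t = (if t < p then u ! t else if t < p + a then m else u ! (t - a))"
    using nth_insb[OF p t] .
  {
    assume nb: "t < p \<or> p + a \<le> t"
    have wt: "?w ! t < m" using nth nb ltn[of t] ltn[of "t - a"] p t by auto
    have "rset ?w t \<subseteq> ?K - {t}" using wt unfolding rset_def by auto
    moreover have "t \<in> ?K" using wt t lw by simp
    ultimately have "card (rset ?w t) \<le> card ?K - 1"
      using card_mono[of "?K - {t}" "rset ?w t"] fK by (simp add: card_Diff_singleton)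
    moreover have "card ?K \<ge> 1" using \<open>t \<in> ?K\<close> fK card_0_eq[OF fK] by (metis One_nat_def Suc_leI empty_iff neq0_conv)
    ultimately show "rank ?w t \<le> length u" unfolding rank_rset using cK by simp
  }
  {
    assume b: "p \<le> t \<and> t < p + a"
    have wt: "?w ! t = m" using nth b by auto
    have "?K \<subseteq> rset ?w t" using wt unfolding rset_def by auto
    then have "card ?K \<le> card (rset ?w t)" using card_mono finite_rset by blast
    then show "length u + 1 \<le> rank ?w t" unfolding rank_rset using cK by simp
  }
qed

lemma rank_prefix:
  assumes "i < length u" "\<forall>x\<in>set P. u ! i < x"
  shows "rank (P @ u) (length P + i) = rank u i"
proof -
  have "rset (P @ u) (length P + i) = (\<lambda>k. length P + k) ` rset u i"
  proof (intro set_eqI iffI)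
    fix k assume k: "k \<in> rset (P @ u) (length P + i)"
    have "\<not> k < length P"
    proof
      assume kl: "k < length P"
      then have "(P @ u) ! k = P ! k" by (simp add: nth_append)
      moreover have "P ! k \<in> set P" using kl by simp
      ultimately show False using k assms(2) unfolding rset_def by (fastforce simp: nth_append)
    qed
    then show "k \<in> (\<lambda>k. length P + k) ` rset u i" using k unfolding rset_def
      by (auto simp: nth_append image_iff intro!: exI[of _ "k - length P"])
  next
    fix k assume "k \<in> (\<lambda>k. length P + k) ` rset u i"
    then show "k \<in> rset (P @ u) (length P + i)" unfolding rset_def by (auto simp: nth_append)
  qed
  then show ?thesis unfolding rank_rset by (simp add: card_image)
qed

lemma rank_suffix:
  assumes "i < length u" "\<forall>x\<in>set Q. u ! i < x"
  shows "rank (u @ Q) i = rank u i"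
proof -
  have "rset (u @ Q) i = rset u i"
  proof (intro set_eqI iffI)
    fix k assume k: "k \<in> rset (u @ Q) i"
    have "\<not> length u \<le> k"
    proof
      assume kl: "length u \<le> k"
      then have "(u @ Q) ! k = Q ! (k - length u)" by (simp add: nth_append)
      moreover have "Q ! (k - length u) \<in> set Q" using kl k unfolding rset_def by (intro nth_mem) auto
      ultimately show False using k assms unfolding rset_def by (fastforce simp: nth_append)
    qed
    then show "k \<in> rset u i" using k assms(1) unfolding rset_def by (auto simp: nth_append)
  next
    fix k assume "k \<in> rset u i"
    then show "k \<in> rset (u @ Q) i" using assms(1) unfolding rset_def by (auto simp: nth_append)
  qed
  then show ?thesis unfolding rank_rset by simp
qed

lemma insb_split:
  assumes "p \<le> length u"
  shows "insb a m u p = take p u @ replicate a m @ drop p u" "length (take p u) = p"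
  using assms unfolding insb_def by auto

lemma hd_drop_ne: "\<forall>y\<in>set u. y < (m::nat) \<Longrightarrow> drop p u = [] \<or> hd (drop p u) \<noteq> m"
proof -
  assume h: "\<forall>y\<in>set u. y < m"
  show ?thesis
  proof (cases "drop p u = []")
    case False
    then have "hd (drop p u) \<in> set (drop p u)" by simp
    then have "hd (drop p u) \<in> set u" by (meson in_set_dropD)
    then have "hd (drop p u) < m" using h by blast
    then have "hd (drop p u) \<noteq> m" by (metis less_not_refl)
    then show ?thesis by blast
  qed simp
qed

lemma last_take_ne: "\<forall>y\<in>set u. y < (m::nat) \<Longrightarrow> take p u = [] \<or> last (take p u) \<noteq> m"
proof -
  assume h: "\<forall>y\<in>set u. y < m"
  show ?thesis
  proof (cases "take p u = []")
    case False
    then have "last (take p u) \<in> set (take p u)" by simp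
    then have "last (take p u) \<in> set u" by (meson in_set_takeD)
    then have "last (take p u) < m" using h by blast
    then have "last (take p u) \<noteq> m" by (metis less_not_refl)
    then show ?thesis by blast
  qed simp
qed

lemma drop_take_app: "q \<le> p \<Longrightarrow> drop q (take p u) @ drop p u = drop q u"
proof -
  assume q: "q \<le> p"
  show ?thesis
  proof (cases "p \<le> length u")
    case True
    have e1: "drop q (take p u @ drop p u) = drop q (take p u) @ drop (q - length (take p u)) (drop p u)"
      by (rule drop_append)
    have "q - length (take p u) = 0" using q True by simp
    then show ?thesis using e1 by simp
  next
    case False
    then show ?thesis by simp
  qed
qed

lemma Mmove_R:
  assumes lt: "\<forall>y\<in>set u. y < m" and p: "p < length u" and a: "0 < a"
  shows "bump (insb a m u p) p True 1 = Some (insb a m u (Suc p))"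
proof -
  have pl: "p \<le> length u" using p by simp
  have hb: "bump (take p u @ replicate a m @ drop p u) (length (take p u) + 0) True 1 =
    (if 1 \<le> (1::nat) \<and> 1 \<le> length (drop p u) \<and> (\<forall>x\<in>set (take 1 (drop p u)). x < m)
     then Some (take p u @ replicate 0 m @ take 1 (drop p u) @ replicate (a - 0) m @ drop 1 (drop p u)) else None)"
    by (rule bump_right_dec[OF a hd_drop_ne[OF lt]])
  have "\<forall>x\<in>set (take 1 (drop p u)). x < m" using lt by (meson in_set_dropD in_set_takeD)
  then have c: "1 \<le> (1::nat) \<and> 1 \<le> length (drop p u) \<and> (\<forall>x\<in>set (take 1 (drop p u)). x < m)"
    using p by simp
  have hb2: "bump (take p u @ replicate a m @ drop p u) (length (take p u) + 0) True 1 =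
     Some (take p u @ replicate 0 m @ take 1 (drop p u) @ replicate (a - 0) m @ drop 1 (drop p u))"
    using hb by (simp only: if_P[OF c])
  have i: "length (take p u) + 0 = p" using pl by simp
  have "take p u @ take 1 (drop p u) = take (Suc p) u" using take_add[of p 1 u] by simp
  then have w: "take p u @ replicate 0 m @ take 1 (drop p u) @ replicate (a - 0) m @ drop 1 (drop p u) = insb a m u (Suc p)"
    unfolding insb_def by (metis append.assoc append_Nil diff_zero drop_drop plus_1_eq_Suc replicate_0)
  have e: "insb a m u p = take p u @ replicate a m @ drop p u" unfolding insb_def ..
  show ?thesis unfolding e using hb2 unfolding i w .
qed

lemma Mmove_L:
  assumes lt: "\<forall>y\<in>set u. y < m" and p: "0 < p" "p \<le> length u" and a: "0 < a"
  shows "bump (insb a m u p) (p + a - 1) False 1 = Some (insb a m u (p - 1))"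
proof -
  have a1: "a - 1 < a" using a by simp
  have hb: "bump (take p u @ replicate a m @ drop p u) (length (take p u) + (a - 1)) False 1 =
    (if 1 \<le> (1::nat) \<and> 1 \<le> length (take p u) \<and> (\<forall>x\<in>set (drop (length (take p u) - 1) (take p u)). x < m)
     then Some (take (length (take p u) - 1) (take p u) @ replicate (Suc (a - 1)) m @ drop (length (take p u) - 1) (take p u) @ replicate (a - Suc (a - 1)) m @ drop p u)
     else None)"
    by (rule bump_left_dec[OF a1 last_take_ne[OF lt]])
  have lp: "length (take p u) = p" using p by simp
  have "\<forall>x\<in>set (drop (p - 1) (take p u)). x < m" using lt by (meson in_set_dropD in_set_takeD)
  then have c: "1 \<le> (1::nat) \<and> 1 \<le> length (take p u) \<and> (\<forall>x\<in>set (drop (length (take p u) - 1) (take p u)). x < m)"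
    using p lp by simp
  have hb2: "bump (take p u @ replicate a m @ drop p u) (length (take p u) + (a - 1)) False 1 =
     Some (take (length (take p u) - 1) (take p u) @ replicate (Suc (a - 1)) m @ drop (length (take p u) - 1) (take p u) @ replicate (a - Suc (a - 1)) m @ drop p u)"
    using hb by (simp only: if_P[OF c])
  have i: "length (take p u) + (a - 1) = p + a - 1" using lp a by simp
  have d: "drop (p - 1) (take p u) @ drop p u = drop (p - 1) u" by (rule drop_take_app) simp
  have w: "take (length (take p u) - 1) (take p u) @ replicate (Suc (a - 1)) m @ drop (length (take p u) - 1) (take p u) @ replicate (a - Suc (a - 1)) m @ drop p u
     = insb a m u (p - 1)"
    unfolding lp insb_def using a d by simp
  have e: "insb a m u p = take p u @ replicate a m @ drop p u" unfolding insb_def ..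
  show ?thesis unfolding e using hb2 unfolding i w .
qed


lemma Mblock:
  assumes lt: "\<forall>y\<in>set u. y < (m::nat)" and p: "p \<le> length u" and a: "0 < a"
    and t: "p \<le> t" "t < p + a"
    and bv: "bump (insb a m u p) t r d = Some v" and nc: "\<not> contains212 v"
  shows "(r \<and> t = p \<and> p + d \<le> length u \<and> v = insb a m u (p + d))
       \<or> (\<not> r \<and> t = p + a - 1 \<and> d \<le> p \<and> v = insb a m u (p - d))"
proof -
  let ?A = "take p u" and ?B = "drop p u"
  define j where "j = t - p"
  have jk: "j < a" using t unfolding j_def by simp
  have lA: "length ?A = p" using p by simp
  have ti: "t = length ?A + j" using t lA unfolding j_def by simp
  have e: "insb a m u p = ?A @ replicate a m @ ?B" unfolding insb_def ..
  show ?thesis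
  proof (cases r)
    case True
    have hb: "bump (?A @ replicate a m @ ?B) (length ?A + j) True d =
      (if 1 \<le> d \<and> d \<le> length ?B \<and> (\<forall>x\<in>set (take d ?B). x < m)
       then Some (?A @ replicate j m @ take d ?B @ replicate (a-j) m @ drop d ?B) else None)"
      by (rule bump_right_dec[OF jk hd_drop_ne[OF lt]])
    have bv': "bump (?A @ replicate a m @ ?B) (length ?A + j) True d = Some v"
      using bv True unfolding e ti by simp
    then have c: "1 \<le> d \<and> d \<le> length ?B \<and> (\<forall>x\<in>set (take d ?B). x < m)"
      and v: "v = ?A @ replicate j m @ take d ?B @ replicate (a-j) m @ drop d ?B"
      using hb by (auto split: if_splits)
    have j0: "j = 0"
    proof (rule ccontr)
      assume "j \<noteq> 0"
      then obtain j' where j': "j = Suc j'" by (cases j) auto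
      obtain k' where k': "a - j = Suc k'" using jk by (metis Suc_diff_Suc)
      have ne: "take d ?B \<noteq> []" using c by auto
      then have "hd (take d ?B) \<in> set (take d ?B)" by (rule hd_in_set)
      moreover have "hd (take d ?B) < m" using c calculation by blast
      moreover have "v = (?A @ replicate j' m) @ m # take d ?B @ m # (replicate k' m @ drop d ?B)"
      proof -
        have r1: "replicate j m = replicate j' m @ [m]" unfolding j' by (simp add: replicate_append_same)
        have r2: "replicate (a - j) m = m # replicate k' m" unfolding k' by simp
        show ?thesis unfolding v r1 r2 by simp
      qed
      ultimately have "contains212 v" using contains212_intro by metis
      then show False using nc by simp
    qed
    have "take p u @ take d (drop p u) = take (p + d) u" using take_add[of p d u] by simp
    then have "v = insb a m u (p + d)" unfolding v j0 insb_def by (simp add: add.commute)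
    moreover have "p + d \<le> length u"
    proof -
      have "d \<le> length u - p" using c by simp
      then show ?thesis using p by arith
    qed
    ultimately show ?thesis using True j0 ti lA by simp
  next
    case False
    have lA': "?A = [] \<or> last ?A \<noteq> m" by (rule last_take_ne[OF lt])
    have hb: "bump (?A @ replicate a m @ ?B) (length ?A + j) False d =
      (if 1 \<le> d \<and> d \<le> length ?A \<and> (\<forall>x\<in>set (drop (length ?A - d) ?A). x < m)
       then Some (take (length ?A - d) ?A @ replicate (Suc j) m @ drop (length ?A - d) ?A @ replicate (a - Suc j) m @ ?B)
       else None)"
      by (rule bump_left_dec[OF jk lA'])
    have bv': "bump (?A @ replicate a m @ ?B) (length ?A + j) False d = Some v"
      using bv False unfolding e ti by simp
    then have c: "1 \<le> d \<and> d \<le> length ?A \<and> (\<forall>x\<in>set (drop (length ?A - d) ?A). x < m)"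
      and v: "v = take (length ?A - d) ?A @ replicate (Suc j) m @ drop (length ?A - d) ?A @ replicate (a - Suc j) m @ ?B"
      using hb by (auto split: if_splits)
    have ja: "Suc j = a"
    proof (rule ccontr)
      assume "Suc j \<noteq> a"
      then obtain k' where k': "a - Suc j = Suc k'" using jk by (metis Suc_diff_Suc Suc_lessI)
      have ne: "drop (length ?A - d) ?A \<noteq> []" using c by auto
      then have "hd (drop (length ?A - d) ?A) \<in> set (drop (length ?A - d) ?A)" by (rule hd_in_set)
      moreover have "hd (drop (length ?A - d) ?A) < m" using c calculation by blast
      moreover have "v = (take (length ?A - d) ?A @ replicate j m) @ m # drop (length ?A - d) ?A @ m # (replicate k' m @ ?B)"
      proof -
        have r1: "replicate (Suc j) m = replicate j m @ [m]" by (simp add: replicate_append_same)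
        have r2: "replicate (a - Suc j) m = m # replicate k' m" unfolding k' by simp
        show ?thesis unfolding v r1 r2 by simp
      qed
      ultimately have "contains212 v" using contains212_intro by metis
      then show False using nc by simp
    qed
    have d: "drop (p - d) (take p u) @ drop p u = drop (p - d) u" by (rule drop_take_app) simp
    have "v = insb a m u (p - d)" unfolding v lA insb_def using ja d by simp
    moreover have "d \<le> p" using c lA by simp
    moreover have "t = p + a - 1" using ti lA ja by simp
    ultimately show ?thesis using False by simp
  qed
qed

definition cands :: "nat list set \<Rightarrow> nat list list \<Rightarrow> (nat \<times> bool) set" where
  "cands L vis = {(i, r). i < length (last vis) \<and> (\<exists>v. minbump L (last vis) i r = Some v \<and> v \<notin> set vis)}"

lemma step_alt:
  "algB_step L vis = (if cands L vis = {} then None else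
     minbump L (last vis) (fst (THE c. c \<in> cands L vis \<and> (\<forall>c'\<in>cands L vis. bkey (last vis) c' \<le> bkey (last vis) c)))
                          (snd (THE c. c \<in> cands L vis \<and> (\<forall>c'\<in>cands L vis. bkey (last vis) c' \<le> bkey (last vis) c))))"
  unfolding algB_step_def cands_def Let_def by simp

lemma step_pick:
  assumes c: "c \<in> cands L vis" and mx: "\<forall>c'\<in>cands L vis. c' \<noteq> c \<longrightarrow> bkey (last vis) c' < bkey (last vis) c"
  shows "algB_step L vis = minbump L (last vis) (fst c) (snd c)"
proof -
  have "(THE c. c \<in> cands L vis \<and> (\<forall>c'\<in>cands L vis. bkey (last vis) c' \<le> bkey (last vis) c)) = c"
  proof (rule the_equality)
    show "c \<in> cands L vis \<and> (\<forall>c'\<in>cands L vis. bkey (last vis) c' \<le> bkey (last vis) c)"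
      using c mx by (metis order.order_iff_strict)
  next
    fix c'' assume h: "c'' \<in> cands L vis \<and> (\<forall>c'\<in>cands L vis. bkey (last vis) c' \<le> bkey (last vis) c'')"
    show "c'' = c"
    proof (rule ccontr)
      assume "c'' \<noteq> c"
      then have "bkey (last vis) c'' < bkey (last vis) c" using mx h by blast
      moreover have "bkey (last vis) c \<le> bkey (last vis) c''" using h c by blast
      ultimately show False by simp
    qed
  qed
  moreover have "cands L vis \<noteq> {}" using c by blast
  ultimately show ?thesis unfolding step_alt by simp
qed

lemma finite_cands: "finite (cands L vis)"
proof -
  have "cands L vis \<subseteq> {..<length (last vis)} \<times> UNIV" unfolding cands_def by auto
  moreover have "finite ({..<length (last vis)} \<times> (UNIV :: bool set))" by simp
  ultimately show ?thesis by (rule finite_subset)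
qed

lemma unique_max_cands:
  assumes "cands L vis \<noteq> {}"
  shows "\<exists>c\<in>cands L vis. \<forall>c'\<in>cands L vis. c' \<noteq> c \<longrightarrow> bkey (last vis) c' < bkey (last vis) c"
proof -
  let ?C = "cands L vis" and ?w = "last vis"
  have f: "finite (bkey ?w ` ?C)" using finite_cands by simp
  have ne: "bkey ?w ` ?C \<noteq> {}" using assms by simp
  obtain c where c: "c \<in> ?C" "bkey ?w c = Max (bkey ?w ` ?C)" using Max_in[OF f ne] by auto
  have "\<forall>c'\<in>?C. c' \<noteq> c \<longrightarrow> bkey ?w c' < bkey ?w c"
  proof (intro ballI impI)
    fix c' assume c': "c' \<in> ?C" "c' \<noteq> c"
    have le: "bkey ?w c' \<le> bkey ?w c" using c c' f by simp
    have "fst c < length ?w" "fst c' < length ?w" using c c' unfolding cands_def by auto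
    then have "bkey ?w c' \<noteq> bkey ?w c" using bkey_inj c' by metis
    then show "bkey ?w c' < bkey ?w c" using le by simp
  qed
  then show ?thesis using c by blast
qed

lemma step_None_iff: "algB_step L vis = None \<longleftrightarrow> cands L vis = {}"
proof
  assume h: "algB_step L vis = None"
  show "cands L vis = {}"
  proof (rule ccontr)
    assume ne: "cands L vis \<noteq> {}"
    obtain c where c: "c \<in> cands L vis" "\<forall>c'\<in>cands L vis. c' \<noteq> c \<longrightarrow> bkey (last vis) c' < bkey (last vis) c"
      using unique_max_cands[OF ne] by blast
    have "minbump L (last vis) (fst c) (snd c) \<noteq> None" using c(1) unfolding cands_def by auto
    then show False using h step_pick[OF c] by simp
  qed
next
  assume "cands L vis = {}"
  then show "algB_step L vis = None" unfolding step_alt by simp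
qed

lemma step_Some:
  assumes "algB_step L vis = Some v"
  shows "\<exists>c\<in>cands L vis. (\<forall>c'\<in>cands L vis. c' \<noteq> c \<longrightarrow> bkey (last vis) c' < bkey (last vis) c)
           \<and> minbump L (last vis) (fst c) (snd c) = Some v"
proof -
  have ne: "cands L vis \<noteq> {}"
  proof
    assume "cands L vis = {}"
    then have "algB_step L vis = None" by (simp add: step_None_iff)
    then show False using assms by simp
  qed
  obtain c where c: "c \<in> cands L vis" "\<forall>c'\<in>cands L vis. c' \<noteq> c \<longrightarrow> bkey (last vis) c' < bkey (last vis) c"
    using unique_max_cands[OF ne] by blast
  then show ?thesis using step_pick[OF c] assms by auto
qed

lemma minbump_Some:
  assumes "minbump L w i r = Some v"
  shows "\<exists>d. bump w i r d = Some v \<and> v \<in> L"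
proof -
  have ex: "\<exists>d. bump_into L w i r d" using assms unfolding minbump_def by (auto split: if_splits)
  have "bump_into L w i r (LEAST d. bump_into L w i r d)" using ex by (rule LeastI_ex)
  moreover have "minbump L w i r = bump w i r (LEAST d. bump_into L w i r d)" using ex unfolding minbump_def by simp
  ultimately show ?thesis using assms unfolding bump_into_def by auto
qed

lemma minbump_one:
  assumes "bump w i r 1 = Some v" "v \<in> L"
  shows "minbump L w i r = Some v"
proof -
  have b1: "bump_into L w i r 1" using assms unfolding bump_into_def by auto
  have "(LEAST d. bump_into L w i r d) = 1"
  proof (rule Least_equality)
    show "bump_into L w i r 1" by (rule b1)
  next
    fix d assume "bump_into L w i r d"
    then show "1 \<le> d" unfolding bump_into_def using bump_Some by blast
  qed
  then show ?thesis using b1 assms unfolding minbump_def by auto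
qed

lemma minbump_lift:
  assumes b: "\<And>d. bump w i' r d = map_option F (bump u i r d)"
    and m: "\<And>d v. bump u i r d = Some v \<Longrightarrow> (F v \<in> L \<longleftrightarrow> v \<in> L')"
  shows "minbump L w i' r = map_option F (minbump L' u i r)"
proof -
  have e: "bump_into L w i' r d \<longleftrightarrow> bump_into L' u i r d" for d
    unfolding bump_into_def using b[of d] m[of d] by (cases "bump u i r d") auto
  then have e2: "(\<lambda>d. bump_into L w i' r d) = (\<lambda>d. bump_into L' u i r d)" by (rule ext)
  show ?thesis unfolding minbump_def e2 using b by auto
qed

lemma divmod_gen: "q < (K::nat) \<Longrightarrow> (j * K + q) div K = j \<and> (j * K + q) mod K = q"
  by simp

locale stp =
  fixes s :: "nat list" and a :: nat and T :: "nat list list"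
  assumes apos: "0 < a"
  and Tne: "T \<noteq> []" and T0: "T ! 0 = start_word s" and Td: "distinct T" and Tset: "set T = Av212 s"
  and Tstep: "\<forall>t. Suc t < length T \<longrightarrow> algB_step (Av212 s) (take (Suc t) T) = Some (T ! Suc t)"
  and Tlast: "algB_step (Av212 s) T = None"
  and Tadj: "\<forall>t. Suc t < length T \<longrightarrow> (\<exists>i r. bump (T ! t) i r 1 = Some (T ! Suc t))"
begin

abbreviation "m \<equiv> Suc (length s)"
abbreviation "n \<equiv> sum_list s"
abbreviation "N \<equiv> Suc n"
abbreviation "M \<equiv> replicate a m"

definition pos :: "nat \<Rightarrow> nat \<Rightarrow> nat" where
  "pos j q = (if even j then n - q else q)"

definition W :: "nat \<Rightarrow> nat list" where
  "W t = insb a m (T ! (t div N)) (pos (t div N) (t mod N))"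

definition TT :: "nat list list" where
  "TT = map W [0..<length T * N]"

lemma uL: "u \<in> Av212 s \<Longrightarrow> length u = n \<and> (\<forall>y\<in>set u. y < m)"
  unfolding Av212_def using swords_length swords_lt by blast

lemma Tu: "j < length T \<Longrightarrow> T ! j \<in> Av212 s"
  using Tset nth_mem by blast

lemma pos_le: "q \<le> n \<Longrightarrow> pos j q \<le> n"
  unfolding pos_def by auto

lemma pos_inv: "q \<le> n \<Longrightarrow> pos j (pos j q) = q"
  unfolding pos_def by (cases "even j") auto

lemma len_TT: "length TT = length T * N"
  unfolding TT_def by simp

lemma TT_nth: "t < length T * N \<Longrightarrow> TT ! t = W t"
  unfolding TT_def by simp

lemma divmod_time: "q < N \<Longrightarrow> (j * N + q) div N = j \<and> (j * N + q) mod N = q"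
  by (rule divmod_gen)

lemma t_dec: "t < length T * N \<Longrightarrow> t div N < length T \<and> t mod N \<le> n \<and> t = (t div N) * N + t mod N"
proof -
  assume t: "t < length T * N"
  have "t div N < length T" using t by (simp add: less_mult_imp_div_less)
  moreover have "t mod N < N" by simp
  moreover have "t = (t div N) * N + t mod N" by (rule div_mult_mod_eq[symmetric])
  ultimately show ?thesis by simp
qed

lemma W_time: "q \<le> n \<Longrightarrow> W (j * N + pos j q) = insb a m (T ! j) q"
proof -
  assume q: "q \<le> n"
  have "pos j q < N" using pos_le[OF q, of j] by simp
  then have "(j * N + pos j q) div N = j" "(j * N + pos j q) mod N = pos j q" using divmod_time by blast+
  then show ?thesis unfolding W_def using pos_inv[OF q] by simp
qed

lemma W_inj:
  assumes "t < length T * N" "t' < length T * N" "W t = W t'"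
  shows "t = t'"
proof -
  let ?j = "t div N" and ?j' = "t' div N" and ?q = "t mod N" and ?q' = "t' mod N"
  have d: "?j < length T \<and> ?q \<le> n \<and> t = ?j * N + ?q" using t_dec assms(1) by blast
  have d': "?j' < length T \<and> ?q' \<le> n \<and> t' = ?j' * N + ?q'" using t_dec assms(2) by blast
  have u: "length (T ! ?j) = n \<and> (\<forall>y\<in>set (T ! ?j). y < m)" using uL Tu d by blast
  have u': "length (T ! ?j') = n \<and> (\<forall>y\<in>set (T ! ?j'). y < m)" using uL Tu d' by blast
  have c: "T ! ?j = T ! ?j' \<and> pos ?j ?q = pos ?j' ?q'"
    using insb_inj[OF apos, of m "T ! ?j" "T ! ?j'" "pos ?j ?q" "pos ?j' ?q'"] u u' pos_le d d' assms(3)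
    unfolding W_def by auto
  then have j: "?j = ?j'" using Td d d' nth_eq_iff_index_eq by metis
  have pq0: "pos ?j ?q = pos ?j' ?q'" using c by blast
  have pq: "pos ?j ?q = pos ?j ?q'" using pq0 unfolding j[symmetric] .
  have "?q = ?q'" using pos_inv[of ?q ?j] pos_inv[of ?q' ?j] d d' pq by metis
  then show ?thesis using d d' j by metis
qed

lemma TT_distinct: "distinct TT"
  unfolding TT_def distinct_map using W_inj by (auto intro: inj_onI)

lemma TT_set: "set TT = Av212 (s @ [a])"
proof
  show "set TT \<subseteq> Av212 (s @ [a])"
  proof
    fix w assume "w \<in> set TT"
    then obtain t where t: "t < length T * N" "w = W t" unfolding TT_def by auto
    have d: "t div N < length T \<and> t mod N \<le> n" using t_dec t(1) by blast
    have u: "T ! (t div N) \<in> Av212 s" using Tu d by blast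
    have "pos (t div N) (t mod N) \<le> length (T ! (t div N))" using pos_le uL u d by metis
    then show "w \<in> Av212 (s @ [a])" unfolding t W_def using Av_insb[OF apos] u by blast
  qed
next
  show "Av212 (s @ [a]) \<subseteq> set TT"
  proof
    fix w assume "w \<in> Av212 (s @ [a])"
    then obtain u p where up: "p \<le> length u" "w = insb a m u p" "u \<in> Av212 s" using Av_dec[OF apos] by blast
    obtain j where j: "j < length T" "u = T ! j" using up Tset by (metis in_set_conv_nth)
    have pn: "p \<le> n" using up uL by metis
    have lt: "j * N + pos j p < length T * N"
    proof -
      have "j * N + pos j p < j * N + N" using pos_le[OF pn, of j] by simp
      also have "\<dots> = Suc j * N" by simp
      also have "\<dots> \<le> length T * N" using j(1) by (intro mult_right_mono) auto
      finally show ?thesis .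
    qed
    have "w = TT ! (j * N + pos j p)" using TT_nth[OF lt] W_time[OF pn] up j by simp
    then show "w \<in> set TT" using lt len_TT by simp
  qed
qed

lemma TT0: "TT \<noteq> [] \<and> TT ! 0 = start_word (s @ [a])"
proof -
  have "0 < length T * N" using Tne by simp
  then have "TT ! 0 = W 0" using TT_nth by blast
  also have "\<dots> = insb a m (T ! 0) n" unfolding W_def pos_def by simp
  also have "\<dots> = start_word s @ M"
    using T0 uL[OF Tu[of 0]] Tne insb_len[of a m "T ! 0"] by simp
  finally show ?thesis using start_word_snoc \<open>0 < length T * N\<close> len_TT by auto
qed

end

lemma mid_lemma:
  fixes s :: "nat list"
  assumes a: "0 < a" and u: "u \<in> Av212 s" and p: "p \<le> length u"
    and w: "last vis = insb a (Suc (length s)) u p"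
    and ci: "p \<le> ci" "ci < p + a"
    and mb: "minbump (Av212 (s @ [a])) (insb a (Suc (length s)) u p) ci cr = Some v0"
    and nv: "v0 \<notin> set vis"
    and H: "\<And>i r d v. p \<le> i \<Longrightarrow> i < p + a \<Longrightarrow> bump (insb a (Suc (length s)) u p) i r d = Some v
             \<Longrightarrow> v \<in> Av212 (s @ [a]) \<Longrightarrow> (i, r) \<noteq> (ci, cr) \<Longrightarrow> v \<in> set vis"
  shows "algB_step (Av212 (s @ [a])) vis = Some v0"
proof -
  let ?m = "Suc (length s)" and ?L = "Av212 (s @ [a])"
  let ?w = "insb a ?m u p"
  have lt: "\<forall>y\<in>set u. y < ?m" using u unfolding Av212_def using swords_lt by blast
  have lw: "length ?w = length u + a" using length_insb[OF p] .
  have cc: "(ci, cr) \<in> cands ?L vis" unfolding cands_def w using mb nv ci lw p by auto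
  have rk: "length u + 1 \<le> rank ?w ci" using rank_insb(2)[OF lt p, of ci a] ci p by simp
  have mx: "\<forall>c'\<in>cands ?L vis. c' \<noteq> (ci, cr) \<longrightarrow> bkey (last vis) c' < bkey (last vis) (ci, cr)"
  proof (intro ballI impI)
    fix c' assume c': "c' \<in> cands ?L vis" "c' \<noteq> (ci, cr)"
    obtain i r where ir: "c' = (i, r)" by (cases c')
    have il: "i < length u + a" and ex: "\<exists>v. minbump ?L ?w i r = Some v \<and> v \<notin> set vis"
      using c' ir unfolding cands_def w lw by auto
    show "bkey (last vis) c' < bkey (last vis) (ci, cr)"
    proof (cases "p \<le> i \<and> i < p + a")
      case True
      obtain v where v: "minbump ?L ?w i r = Some v" "v \<notin> set vis" using ex by blast
      obtain d where "bump ?w i r d = Some v" "v \<in> ?L" using minbump_Some[OF v(1)] by blast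
      then have "v \<in> set vis" using H True c' ir by blast
      then show ?thesis using v by blast
    next
      case False
      then have "rank ?w i \<le> length u" using rank_insb(1)[OF lt p il] by auto
      then show ?thesis using rk unfolding ir w bkey_def by auto
    qed
  qed
  show ?thesis using step_pick[OF cc mx] mb w by simp
qed

lemma lift_bump:
  fixes u :: "nat list"
  assumes lt: "\<forall>y\<in>set u. y < m" and pp: "p = 0 \<or> p = length u" and i: "i < length u"
  shows "bump (insb a m u p) (if p = 0 then a + i else i) r d = map_option (\<lambda>v. insb a m v p) (bump u i r d)"
proof (cases "p = 0")
  case True
  have gt: "\<forall>x\<in>set (replicate a m). u ! i < x" using lt i by auto
  have "bump (replicate a m @ u) (length (replicate a m) + i) r d = map_option ((@) (replicate a m)) (bump u i r d)"
    by (rule bump_prefix[OF i gt])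
  moreover have "(\<lambda>v. insb a m v p) = (@) (replicate a m)" using True by (auto simp: insb_0)
  ultimately show ?thesis using True by (simp add: insb_0)
next
  case False
  then have p: "p = length u" using pp by simp
  have gt: "\<forall>x\<in>set (replicate a m). u ! i < x" using lt i by auto
  have b: "bump (u @ replicate a m) i r d = map_option (\<lambda>v. v @ replicate a m) (bump u i r d)"
    by (rule bump_suffix[OF i gt])
  show ?thesis
  proof (cases "bump u i r d")
    case None
    then show ?thesis using b False p by (simp add: insb_len)
  next
    case (Some v)
    have "length v = length u" using bump_Some[OF Some] by simp
    then show ?thesis using b False p Some by (simp add: insb_len) (metis insb_len)
  qed
qed

lemma end_lemma:
  fixes s :: "nat list"
  assumes a: "0 < a" and u: "u \<in> Av212 s" and pp: "p = 0 \<or> p = length u"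
    and lw: "last vis = insb a (Suc (length s)) u p" and lu: "last visu = u"
    and Hvis: "\<And>v. v \<in> Av212 s \<Longrightarrow> (insb a (Suc (length s)) v p \<in> set vis \<longleftrightarrow> v \<in> set visu)"
    and Hblk: "\<And>q. q \<le> length u \<Longrightarrow> insb a (Suc (length s)) u q \<in> set vis"
  shows "algB_step (Av212 (s @ [a])) vis = map_option (\<lambda>v. insb a (Suc (length s)) v p) (algB_step (Av212 s) visu)"
proof -
  let ?m = "Suc (length s)" and ?L = "Av212 (s @ [a])" and ?L' = "Av212 s"
  let ?w = "insb a ?m u p"
  define \<iota> where "\<iota> i = (if p = 0 then a + i else i)" for i
  define f where "f c = (\<iota> (fst c), snd c)" for c :: "nat \<times> bool"
  have lt: "\<forall>y\<in>set u. y < ?m" using u unfolding Av212_def using swords_lt by blast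
  have p: "p \<le> length u" using pp by auto
  have lenw: "length ?w = length u + a" using length_insb[OF p] .
  have F1: "bump ?w (\<iota> i) r d = map_option (\<lambda>v. insb a ?m v p) (bump u i r d)" if "i < length u" for i r d
    unfolding \<iota>_def by (rule lift_bump[OF lt pp that])
  have F3: "minbump ?L ?w (\<iota> i) r = map_option (\<lambda>v. insb a ?m v p) (minbump ?L' u i r)" if "i < length u" for i r
  proof (rule minbump_lift)
    show "\<And>d. bump ?w (\<iota> i) r d = map_option (\<lambda>v. insb a ?m v p) (bump u i r d)" using F1[OF that] .
  next
    fix d v assume "bump u i r d = Some v"
    then have "length v = length u" using bump_Some by blast
    then have "p \<le> length v" using p by simp
    then show "insb a ?m v p \<in> ?L \<longleftrightarrow> v \<in> ?L'" using Av_insb[OF a] by blast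
  qed
  have F2: "rank ?w (\<iota> i) = rank u i" if "i < length u" for i
  proof (cases "p = 0")
    case True
    then have "rank ?w (\<iota> i) = rank (replicate a ?m @ u) (length (replicate a ?m) + i)"
      unfolding \<iota>_def by (simp add: insb_0)
    also have "\<dots> = rank u i"
    proof -
      have gt: "\<forall>x\<in>set (replicate a ?m). u ! i < x" using lt that by auto
      show ?thesis by (rule rank_prefix[OF that gt])
    qed
    finally show ?thesis .
  next
    case False
    then have "rank ?w (\<iota> i) = rank (u @ replicate a ?m) i" using pp unfolding \<iota>_def by (simp add: insb_len)
    also have "\<dots> = rank u i"
    proof -
      have gt: "\<forall>x\<in>set (replicate a ?m). u ! i < x" using lt that by auto
      show ?thesis by (rule rank_suffix[OF that gt])
    qed
    finally show ?thesis .
  qed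
  have F4: "\<exists>i. i < length u \<and> i' = \<iota> i" if "i' < length u + a" "\<not> (p \<le> i' \<and> i' < p + a)" for i'
  proof (cases "p = 0")
    case True
    then show ?thesis using that unfolding \<iota>_def by (intro exI[of _ "i' - a"]) auto
  next
    case False
    then show ?thesis using that pp unfolding \<iota>_def by (intro exI[of _ i']) auto
  qed
  have F5: "(i', r) \<notin> cands ?L vis" if "p \<le> i'" "i' < p + a" for i' r
  proof
    assume "(i', r) \<in> cands ?L vis"
    then obtain v where v: "minbump ?L ?w i' r = Some v" "v \<notin> set vis" unfolding cands_def lw by auto
    obtain d where d: "bump ?w i' r d = Some v" "v \<in> ?L" using minbump_Some[OF v(1)] by blast
    have "\<not> contains212 v" using d(2) unfolding Av212_def by simp
    then have mb: "(r \<and> i' = p \<and> p + d \<le> length u \<and> v = insb a ?m u (p + d))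
       \<or> (\<not> r \<and> i' = p + a - 1 \<and> d \<le> p \<and> v = insb a ?m u (p - d))"
      using Mblock[OF lt p a that d(1)] by blast
    have "\<exists>q. q \<le> length u \<and> v = insb a ?m u q"
    proof (rule disjE[OF mb])
      assume h: "r \<and> i' = p \<and> p + d \<le> length u \<and> v = insb a ?m u (p + d)"
      show ?thesis using h by blast
    next
      assume h: "\<not> r \<and> i' = p + a - 1 \<and> d \<le> p \<and> v = insb a ?m u (p - d)"
      have "p - d \<le> length u" using p by simp
      then show ?thesis using h by blast
    qed
    then show False using Hblk v(2) by blast
  qed
  have lenu: "length u = length (last visu)" using lu by simp
  have C: "cands ?L vis = f ` cands ?L' visu"
  proof (intro set_eqI iffI)
    fix c assume c: "c \<in> cands ?L vis"
    obtain i' r where ir: "c = (i', r)" by (cases c)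
    have il: "i' < length u + a" using c ir unfolding cands_def lw lenw by auto
    have nb: "\<not> (p \<le> i' \<and> i' < p + a)" using F5 c ir by blast
    obtain i where i: "i < length u" "i' = \<iota> i" using F4[OF il nb] by blast
    obtain v' where v': "minbump ?L ?w i' r = Some v'" "v' \<notin> set vis" using c ir unfolding cands_def lw by auto
    obtain v where v: "minbump ?L' u i r = Some v" "v' = insb a ?m v p" using v'(1) F3[OF i(1), of r] i(2) by auto
    have "v \<in> ?L'" using minbump_Some[OF v(1)] by blast
    then have "v \<notin> set visu" using Hvis v'(2) v(2) by blast
    then have "(i, r) \<in> cands ?L' visu" unfolding cands_def lu using i v by auto
    then show "c \<in> f ` cands ?L' visu" unfolding f_def ir using i by force
  next
    fix c assume "c \<in> f ` cands ?L' visu"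
    then obtain i r where ir: "(i, r) \<in> cands ?L' visu" "c = (\<iota> i, r)" unfolding f_def by auto
    obtain v where v: "minbump ?L' u i r = Some v" "v \<notin> set visu" and i: "i < length u"
      using ir(1) unfolding cands_def lu by auto
    have "v \<in> ?L'" using minbump_Some[OF v(1)] by blast
    then have "insb a ?m v p \<notin> set vis" using Hvis v(2) by blast
    moreover have "minbump ?L ?w (\<iota> i) r = Some (insb a ?m v p)" using F3[OF i] v(1) by simp
    moreover have "\<iota> i < length ?w" using i lenw unfolding \<iota>_def by auto
    ultimately show "c \<in> cands ?L vis" unfolding cands_def lw ir(2) by auto
  qed
  have K: "bkey ?w (f c) = bkey u c" if "fst c < length u" for c
    unfolding bkey_def f_def using F2[OF that] by simp
  show ?thesis
  proof (cases "cands ?L' visu = {}")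
    case True
    then have "cands ?L vis = {}" using C by simp
    then have "algB_step ?L vis = None" by (simp add: step_None_iff)
    moreover have "algB_step ?L' visu = None" using True by (simp add: step_None_iff)
    ultimately show ?thesis by simp
  next
    case False
    then obtain v where sv: "algB_step ?L' visu = Some v" using step_None_iff by (metis not_None_eq)
    obtain c where c: "c \<in> cands ?L' visu" "\<forall>c'\<in>cands ?L' visu. c' \<noteq> c \<longrightarrow> bkey u c' < bkey u c"
      "minbump ?L' u (fst c) (snd c) = Some v"
      using step_Some[OF sv] lu by blast
    have cl: "fst c < length u" using c(1) unfolding cands_def lu by auto
    have fc: "f c \<in> cands ?L vis" using C c(1) by blast
    have mx: "\<forall>c'\<in>cands ?L vis. c' \<noteq> f c \<longrightarrow> bkey (last vis) c' < bkey (last vis) (f c)"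
    proof (intro ballI impI)
      fix c' assume c': "c' \<in> cands ?L vis" "c' \<noteq> f c"
      then obtain c'' where c'': "c'' \<in> cands ?L' visu" "c' = f c''" using C by blast
      have "c'' \<noteq> c" using c'' c'(2) by blast
      then have "bkey u c'' < bkey u c" using c(2) c''(1) by blast
      moreover have "fst c'' < length u" using c''(1) unfolding cands_def lu by auto
      ultimately show "bkey (last vis) c' < bkey (last vis) (f c)" using K cl c'' lw by simp
    qed
    have "algB_step ?L vis = minbump ?L ?w (fst (f c)) (snd (f c))" using step_pick[OF fc mx] lw by simp
    also have "\<dots> = Some (insb a ?m v p)" unfolding f_def using F3[OF cl] c(3) by simp
    finally show ?thesis using sv by simp
  qed
qed

context stp begin

lemma last_take_Suc: "t < length xs \<Longrightarrow> last (take (Suc t) xs) = xs ! t"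
  by (simp add: take_Suc_conv_app_nth)

lemma in_take_TT:
  assumes "t < length T * N"
  shows "x \<in> set (take (Suc t) TT) \<longleftrightarrow> (\<exists>t'\<le>t. x = W t')"
proof
  assume "x \<in> set (take (Suc t) TT)"
  then obtain t' where t': "t' < length (take (Suc t) TT)" "x = take (Suc t) TT ! t'" by (auto simp: in_set_conv_nth)
  then have "t' \<le> t" "t' < length T * N" using assms len_TT by auto
  then show "\<exists>t'\<le>t. x = W t'" using t' TT_nth by auto
next
  assume "\<exists>t'\<le>t. x = W t'"
  then obtain t' where t': "t' \<le> t" "x = W t'" by blast
  then have "t' < length (take (Suc t) TT)" "take (Suc t) TT ! t' = TT ! t'" using assms len_TT by auto
  then show "x \<in> set (take (Suc t) TT)" using t' TT_nth assms by (metis le_less_trans nth_mem)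
qed

lemma vis_char:
  assumes t: "t < length T * N" and v: "v \<in> Av212 s" and q: "q \<le> n"
  shows "insb a m v q \<in> set (take (Suc t) TT) \<longleftrightarrow> (\<exists>j<length T. v = T ! j \<and> j * N + pos j q \<le> t)"
proof
  assume "insb a m v q \<in> set (take (Suc t) TT)"
  then obtain t' where t': "t' \<le> t" "insb a m v q = W t'" using in_take_TT[OF t] by blast
  let ?j = "t' div N" and ?q = "t' mod N"
  have d: "?j < length T \<and> ?q \<le> n \<and> t' = ?j * N + ?q" using t_dec t t'(1) by (meson le_less_trans)
  have u: "length (T ! ?j) = n \<and> (\<forall>y\<in>set (T ! ?j). y < m)" using uL Tu d by blast
  have vv: "length v = n \<and> (\<forall>y\<in>set v. y < m)" using uL v by blast
  have "v = T ! ?j \<and> q = pos ?j ?q"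
    using insb_inj[OF apos, of m v "T ! ?j" q "pos ?j ?q"] u vv q pos_le d t'(2) unfolding W_def by auto
  then have "?j * N + pos ?j q = t'" using pos_inv d by metis
  then show "\<exists>j<length T. v = T ! j \<and> j * N + pos j q \<le> t" using d t'(1) \<open>v = T ! ?j \<and> q = pos ?j ?q\<close> by metis
next
  assume "\<exists>j<length T. v = T ! j \<and> j * N + pos j q \<le> t"
  then obtain j where j: "j < length T" "v = T ! j" "j * N + pos j q \<le> t" by blast
  then have "insb a m v q = W (j * N + pos j q)" using W_time[OF q] by simp
  then show "insb a m v q \<in> set (take (Suc t) TT)" using in_take_TT[OF t] j(3) by blast
qed

lemma end_case:
  assumes j: "j < length T"
  shows "algB_step (Av212 (s @ [a])) (take (Suc (j * N + n)) TT)
       = map_option (\<lambda>v. insb a m v (pos j n)) (algB_step (Av212 s) (take (Suc j) T))"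
proof -
  let ?t = "j * N + n" and ?u = "T ! j" and ?p = "pos j n"
  have tl: "?t < length T * N"
  proof -
    have "?t < Suc j * N" by simp
    also have "\<dots> \<le> length T * N" using j by (intro mult_right_mono) auto
    finally show ?thesis .
  qed
  have u: "?u \<in> Av212 s" using Tu j by blast
  have lu: "length ?u = n" using uL u by blast
  have pn: "?p \<le> n" using pos_le by simp
  have pp: "?p = 0 \<or> ?p = length ?u" unfolding pos_def using lu by auto
  have lw: "last (take (Suc ?t) TT) = insb a m ?u ?p"
  proof -
    have "?t < length TT" using tl len_TT by simp
    then have "last (take (Suc ?t) TT) = TT ! ?t" by (rule last_take_Suc)
    also have "\<dots> = W ?t" using TT_nth tl by blast
    also have "\<dots> = insb a m ?u ?p"
    proof -
      have "?t div N = j" "?t mod N = n" using divmod_time[of n j] by auto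
      then show ?thesis unfolding W_def by simp
    qed
    finally show ?thesis .
  qed
  have lvu: "last (take (Suc j) T) = ?u" using j last_take_Suc by blast
  have Hvis: "insb a m v ?p \<in> set (take (Suc ?t) TT) \<longleftrightarrow> v \<in> set (take (Suc j) T)" if v: "v \<in> Av212 s" for v
  proof -
    have "insb a m v ?p \<in> set (take (Suc ?t) TT) \<longleftrightarrow> (\<exists>j'<length T. v = T ! j' \<and> j' * N + pos j' ?p \<le> ?t)"
      using vis_char[OF tl v pn] .
    also have "\<dots> \<longleftrightarrow> (\<exists>j'<Suc j. v = T ! j')"
    proof
      assume "\<exists>j'<length T. v = T ! j' \<and> j' * N + pos j' ?p \<le> ?t"
      then obtain j' where j': "j' < length T" "v = T ! j'" "j' * N + pos j' ?p \<le> ?t" by blast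
      have "j' < Suc j"
      proof (rule ccontr)
        assume "\<not> j' < Suc j"
        then have "Suc j * N \<le> j' * N" by (intro mult_right_mono) auto
        then show False using j'(3) by simp
      qed
      then show "\<exists>j'<Suc j. v = T ! j'" using j' by blast
    next
      assume "\<exists>j'<Suc j. v = T ! j'"
      then obtain j' where j': "j' < Suc j" "v = T ! j'" by blast
      have "j' * N \<le> j * N" using j' by (intro mult_right_mono) auto
      moreover have "pos j' ?p \<le> n" using pos_le pn by blast
      ultimately have "j' * N + pos j' ?p \<le> ?t" by linarith
      moreover have "j' < length T" using j' j by simp
      ultimately show "\<exists>j'<length T. v = T ! j' \<and> j' * N + pos j' ?p \<le> ?t" using j'(2) by blast
    qed
    also have "\<dots> \<longleftrightarrow> v \<in> set (take (Suc j) T)"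
      using j by (auto simp: in_set_conv_nth)
    finally show ?thesis .
  qed
  have Hblk: "insb a m ?u q \<in> set (take (Suc ?t) TT)" if q: "q \<le> length ?u" for q
  proof -
    have qn: "q \<le> n" using q lu by simp
    have "j * N + pos j q \<le> ?t" using pos_le[OF qn] by simp
    then show ?thesis using vis_char[OF tl u qn] j by blast
  qed
  show ?thesis by (rule end_lemma[OF apos u pp lw lvu Hvis Hblk])
qed

lemma mid_case:
  assumes tS: "Suc t < length T * N" and qn: "t mod N < n"
  shows "algB_step (Av212 (s @ [a])) (take (Suc t) TT) = Some (TT ! Suc t)
       \<and> (\<exists>i r. bump (TT ! t) i r 1 = Some (TT ! Suc t))"
proof -
  let ?j = "t div N" and ?q = "t mod N"
  let ?L = "Av212 (s @ [a])"
  have tl: "t < length T * N" using tS by simp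
  have d: "?j < length T \<and> ?q \<le> n \<and> t = ?j * N + ?q" using t_dec tl by blast
  define u where "u = T ! ?j"
  define p where "p = pos ?j ?q"
  have u: "u \<in> Av212 s" using Tu d unfolding u_def by blast
  have lu: "length u = n" and lt: "\<forall>y\<in>set u. y < m" using uL u by auto
  have St: "Suc t = ?j * N + Suc ?q" using d by simp
  have Sdm: "Suc t div N = ?j" "Suc t mod N = Suc ?q" using divmod_time[of "Suc ?q" ?j] St qn by auto
  have next_: "TT ! Suc t = insb a m u (pos ?j (Suc ?q))"
    using TT_nth[OF tS] Sdm unfolding W_def u_def by simp
  have lw: "last (take (Suc t) TT) = insb a m u p"
  proof -
    have "t < length TT" using tl len_TT by simp
    then have "last (take (Suc t) TT) = TT ! t" by (rule last_take_Suc)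
    then show ?thesis using TT_nth[OF tl] unfolding W_def u_def p_def by simp
  qed
  have cur: "TT ! t = insb a m u p" using TT_nth[OF tl] unfolding W_def u_def p_def by simp
  have nv: "TT ! Suc t \<notin> set (take (Suc t) TT)"
  proof
    assume "TT ! Suc t \<in> set (take (Suc t) TT)"
    then obtain t' where t': "t' < Suc t" "TT ! Suc t = take (Suc t) TT ! t'" by (auto simp: in_set_conv_nth)
    then have "TT ! t' = TT ! Suc t" by simp
    moreover have "t' < length TT" "Suc t < length TT" using t' tS len_TT by auto
    ultimately have "t' = Suc t" using TT_distinct nth_eq_iff_index_eq by blast
    then show False using t' by simp
  qed
  have pl: "p \<le> length u" using pos_le d lu unfolding p_def by simp
  have vis_j: "insb a m u q' \<in> set (take (Suc t) TT)" if "q' \<le> n" "pos ?j q' \<le> ?q" for q'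
  proof -
    have "?j * N + pos ?j q' \<le> t" using that d by linarith
    then show ?thesis using vis_char[OF tl u that(1)] d unfolding u_def by blast
  qed
  show ?thesis
  proof (cases "even ?j")
    case True
    have pv: "p = n - ?q" unfolding p_def pos_def using True by simp
    have p0: "0 < p" using pv qn by simp
    have pn: "pos ?j (Suc ?q) = p - 1" unfolding pos_def using True pv by simp
    have b1: "bump (insb a m u p) (p + a - 1) False 1 = Some (insb a m u (p - 1))"
      by (rule Mmove_L[OF lt p0 pl apos])
    have inL: "insb a m u (p - 1) \<in> ?L" using Av_insb[OF apos] u pl by simp
    have mb: "minbump ?L (insb a m u p) (p + a - 1) False = Some (insb a m u (p - 1))"
      by (rule minbump_one[OF b1 inL])
    have H: "v \<in> set (take (Suc t) TT)"
      if "p \<le> i" "i < p + a" "bump (insb a m u p) i r d = Some v" "v \<in> ?L" "(i, r) \<noteq> (p + a - 1, False)"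
      for i r d v
    proof -
      have nc: "\<not> contains212 v" using that(4) unfolding Av212_def by simp
      have "(r \<and> i = p \<and> p + d \<le> length u \<and> v = insb a m u (p + d))
         \<or> (\<not> r \<and> i = p + a - 1 \<and> d \<le> p \<and> v = insb a m u (p - d))"
        by (rule Mblock[OF lt pl apos that(1,2,3) nc])
      then have h: "p + d \<le> length u \<and> v = insb a m u (p + d)" using that(5) by auto
      have "pos ?j (p + d) \<le> ?q" unfolding pos_def using True pv h lu by simp
      then show ?thesis using vis_j[of "p + d"] h lu by simp
    qed
    have "algB_step ?L (take (Suc t) TT) = Some (insb a m u (p - 1))"
      using mid_lemma[OF apos u pl lw _ _ mb _ H] apos nv next_ pn by simp
    then show ?thesis using next_ pn b1 cur by auto
  next
    case False
    have pv: "p = ?q" unfolding p_def pos_def using False by simp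
    have pn: "pos ?j (Suc ?q) = Suc p" unfolding pos_def using False pv by simp
    have plt: "p < length u" using pv qn lu by simp
    have b1: "bump (insb a m u p) p True 1 = Some (insb a m u (Suc p))"
      by (rule Mmove_R[OF lt plt apos])
    have inL: "insb a m u (Suc p) \<in> ?L" using Av_insb[OF apos] u plt by simp
    have mb: "minbump ?L (insb a m u p) p True = Some (insb a m u (Suc p))"
      by (rule minbump_one[OF b1 inL])
    have H: "v \<in> set (take (Suc t) TT)"
      if "p \<le> i" "i < p + a" "bump (insb a m u p) i r d = Some v" "v \<in> ?L" "(i, r) \<noteq> (p, True)"
      for i r d v
    proof -
      have nc: "\<not> contains212 v" using that(4) unfolding Av212_def by simp
      have "(r \<and> i = p \<and> p + d \<le> length u \<and> v = insb a m u (p + d))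
         \<or> (\<not> r \<and> i = p + a - 1 \<and> d \<le> p \<and> v = insb a m u (p - d))"
        by (rule Mblock[OF lt pl apos that(1,2,3) nc])
      then have h: "v = insb a m u (p - d)" using that(5) by auto
      have "pos ?j (p - d) \<le> ?q" unfolding pos_def using False pv by simp
      moreover have "p - d \<le> n" using pl lu by simp
      ultimately show ?thesis using vis_j[of "p - d"] h by simp
    qed
    have "algB_step ?L (take (Suc t) TT) = Some (insb a m u (Suc p))"
      using mid_lemma[OF apos u pl lw _ _ mb _ H] apos nv next_ pn by simp
    then show ?thesis using next_ pn b1 cur by auto
  qed
qed

lemma TT_step:
  assumes tS: "Suc t < length TT"
  shows "algB_step (Av212 (s @ [a])) (take (Suc t) TT) = Some (TT ! Suc t)
       \<and> (\<exists>i r. bump (TT ! t) i r 1 = Some (TT ! Suc t))"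
proof (cases "t mod N < n")
  case True
  then show ?thesis using mid_case tS len_TT by simp
next
  case False
  let ?j = "t div N"
  have tS': "Suc t < length T * N" using tS len_TT by simp
  have tl: "t < length T * N" using tS' by simp
  have d: "?j < length T \<and> t mod N \<le> n \<and> t = ?j * N + t mod N" using t_dec tl by blast
  then have "t mod N \<le> n" by blast
  then have q: "t mod N = n" using False by linarith
  then have te: "t = ?j * N + n" using d by simp
  have St: "Suc t = Suc ?j * N + 0" using te by simp
  have j1: "Suc ?j < length T"
  proof (rule ccontr)
    assume "\<not> Suc ?j < length T"
    then have "length T * N \<le> Suc ?j * N" by (intro mult_right_mono) auto
    then show False using tS' St by simp
  qed
  have pe: "pos (Suc ?j) 0 = pos ?j n" unfolding pos_def by simp
  have nxt: "TT ! Suc t = insb a m (T ! Suc ?j) (pos ?j n)"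
  proof -
    have "Suc t div N = Suc ?j" "Suc t mod N = 0" using divmod_time[of 0 "Suc ?j"] St by auto
    then show ?thesis using TT_nth[OF tS'] pe unfolding W_def by simp
  qed
  have cur: "TT ! t = insb a m (T ! ?j) (pos ?j n)"
    using TT_nth[OF tl] q unfolding W_def by simp
  have "algB_step (Av212 (s @ [a])) (take (Suc t) TT)
       = map_option (\<lambda>v. insb a m v (pos ?j n)) (algB_step (Av212 s) (take (Suc ?j) T))"
    using end_case[of ?j] d te by simp
  also have "\<dots> = Some (TT ! Suc t)" using Tstep j1 nxt by simp
  finally have st: "algB_step (Av212 (s @ [a])) (take (Suc t) TT) = Some (TT ! Suc t)" .
  obtain i r where b: "bump (T ! ?j) i r 1 = Some (T ! Suc ?j)" using Tadj j1 by blast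
  have u: "T ! ?j \<in> Av212 s" using Tu d by blast
  have lu: "length (T ! ?j) = n" and lt: "\<forall>y\<in>set (T ! ?j). y < m" using uL u by auto
  have pp: "pos ?j n = 0 \<or> pos ?j n = length (T ! ?j)" unfolding pos_def using lu by simp
  have il: "i < length (T ! ?j)" using bump_Some[OF b] by simp
  have "bump (TT ! t) (if pos ?j n = 0 then a + i else i) r 1 = Some (TT ! Suc t)"
    using lift_bump[OF lt pp il, of a r 1] b cur nxt by simp
  then show ?thesis using st by blast
qed

lemma TT_last: "algB_step (Av212 (s @ [a])) TT = None"
proof -
  let ?j = "length T - 1"
  have j: "?j < length T" using Tne by simp
  have t: "Suc (?j * N + n) = length TT"
  proof -
    have "Suc (?j * N + n) = Suc ?j * N" by simp
    also have "Suc ?j = length T" using Tne by simp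
    finally show ?thesis using len_TT by simp
  qed
  have "algB_step (Av212 (s @ [a])) (take (Suc (?j * N + n)) TT)
       = map_option (\<lambda>v. insb a m v (pos ?j n)) (algB_step (Av212 s) (take (Suc ?j) T))"
    by (rule end_case[OF j])
  moreover have "take (Suc ?j) T = T" using Tne by simp
  ultimately show ?thesis using t Tlast by simp
qed

lemma result:
  "\<exists>T2. T2 \<noteq> [] \<and> T2 ! 0 = start_word (s @ [a]) \<and> distinct T2 \<and> set T2 = Av212 (s @ [a])
     \<and> (\<forall>t. Suc t < length T2 \<longrightarrow> algB_step (Av212 (s @ [a])) (take (Suc t) T2) = Some (T2 ! Suc t))
     \<and> algB_step (Av212 (s @ [a])) T2 = None
     \<and> (\<forall>t. Suc t < length T2 \<longrightarrow> (\<exists>i r. bump (T2 ! t) i r 1 = Some (T2 ! Suc t)))"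
  using TT0 TT_distinct TT_set TT_step TT_last by (intro exI[of _ TT]) blast

end

lemma gen:
  "\<forall>x\<in>set s. 0 < x \<Longrightarrow> \<exists>T. T \<noteq> [] \<and> T ! 0 = start_word s \<and> distinct T \<and> set T = Av212 s
     \<and> (\<forall>t. Suc t < length T \<longrightarrow> algB_step (Av212 s) (take (Suc t) T) = Some (T ! Suc t))
     \<and> algB_step (Av212 s) T = None
     \<and> (\<forall>t. Suc t < length T \<longrightarrow> (\<exists>i r. bump (T ! t) i r 1 = Some (T ! Suc t)))"
proof (induction s rule: rev_induct)
  case Nil
  have L: "Av212 [] = {[]}" unfolding Av212_def swords_def contains212_def by auto
  have sw: "start_word [] = []" unfolding start_word_def by simp
  have "cands (Av212 []) [[]] = {}" unfolding cands_def by simp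
  then have "algB_step (Av212 []) [[]] = None" by (simp add: step_None_iff)
  then show ?case using L sw by (intro exI[of _ "[[]]"]) auto
next
  case (snoc a s)
  have a: "0 < a" using snoc.prems by simp
  have "\<forall>x\<in>set s. 0 < x" using snoc.prems by simp
  then obtain T where T: "T \<noteq> []" "T ! 0 = start_word s" "distinct T" "set T = Av212 s"
     "\<forall>t. Suc t < length T \<longrightarrow> algB_step (Av212 s) (take (Suc t) T) = Some (T ! Suc t)"
     "algB_step (Av212 s) T = None"
     "\<forall>t. Suc t < length T \<longrightarrow> (\<exists>i r. bump (T ! t) i r 1 = Some (T ! Suc t))"
    using snoc.IH by blast
  interpret stp s a T using a T by unfold_locales
  show ?case by (rule result)
qed

theorem mainTheorem3:
  fixes s :: "nat list"
  assumes "\<forall>x\<in>set s. 0 < x"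
  shows "\<exists>k. algB_step (Av212 s) (algB_run (Av212 s) (start_word s) k) = None
           \<and> distinct (algB_run (Av212 s) (start_word s) k)
           \<and> set (algB_run (Av212 s) (start_word s) k) = Av212 s
           \<and> (\<forall>j. Suc j < length (algB_run (Av212 s) (start_word s) k) \<longrightarrow>
                (\<exists>i r. bump (algB_run (Av212 s) (start_word s) k ! j) i r 1
                        = Some (algB_run (Av212 s) (start_word s) k ! Suc j)))"
proof -
  obtain T where T: "T \<noteq> []" "T ! 0 = start_word s" "distinct T" "set T = Av212 s"
     "\<forall>t. Suc t < length T \<longrightarrow> algB_step (Av212 s) (take (Suc t) T) = Some (T ! Suc t)"
     "algB_step (Av212 s) T = None"
     "\<forall>t. Suc t < length T \<longrightarrow> (\<exists>i r. bump (T ! t) i r 1 = Some (T ! Suc t))"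
    using gen[OF assms] by blast
  have run: "algB_run (Av212 s) (start_word s) k = take (Suc k) T" if "k < length T" for k
    using that
  proof (induction k)
    case 0
    then show ?case using T(1,2) by (cases T) auto
  next
    case (Suc k)
    then have "algB_run (Av212 s) (start_word s) k = take (Suc k) T" by simp
    moreover have "algB_step (Av212 s) (take (Suc k) T) = Some (T ! Suc k)" using T(5) Suc.prems by blast
    ultimately show ?case using Suc.prems by (simp add: take_Suc_conv_app_nth)
  qed
  have r: "algB_run (Av212 s) (start_word s) (length T - 1) = T" using run[of "length T - 1"] T(1) by simp
  show ?thesis using T r by (intro exI[of _ "length T - 1"]) simp
qed


end
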